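(* Let $X$ be a compact Hausdorff space such that $C(X)$ is not $C^*$-reflexive. Then there exists a sequence $\{U_k\}_{k\in\mathbb N}$ of pairwise disjoint open subsets of $X$ such that $\prod_k C_0(U_k)$ is canonically included into $C(X)$.
   Context: A $C^*$-algebra $A$ is called $C^*$-reflexive if the standard Hilbert module $l_2(A)$ (right Hilbert $A$-module of sequences $(a_i)$ with $\sum_i a_i^*a_i$ norm convergent, inner product $\sum_i a_i^*b_i$) is $C^*$-reflexive, i.e. the canonical isometric inclusion $l_2(A)\subseteq l_2(A)''$ is surjective, where $M'$ denotes the module of bounded $A$-module maps $M\to A$ and $M''=(M')'$ (Paschke's conventions). For an open $U\subseteq X$, $C_0(U)$ is identified with the ideal of functions in $C(X)$ vanishing on $X\setminus U$. For pairwise disjoint open sets $U_k$, $\prod_k C_0(U_k)$ is the $C^*$-algebra of bounded sequences $(\lambda_k)$, $\lambda_k\in C_0(U_k)$, with sup norm. We say $\prod_kC_0(U_k)$ is canonically included into $C(X)$ if the canonical inclusion $\bigoplus_k C_0(U_k)\subseteq C(X)$ (sum of the functions) extends to an inclusion of $\prod_k C_0(U_k)$, i.e. for every bounded sequence $(\lambda_k)$ with $\lambda_k\in C_0(U_k)$ there is a (necessarily unique) continuous function on $X$ which equals $\lambda_k$ on each $U_k$ and vanishes on $X\setminus\overline{\bigcup_k U_k}$. *)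

theory Defs
  imports "HOL-Analysis.Analysis"
begin

text \<open>Elements are represented by functions that are
  continuous on X and vanish outside the carrier topspace X (so that equality of
  elements is equality of HOL functions).\<close>

definition cfun :: "'a topology \<Rightarrow> ('a \<Rightarrow> complex) set" where
  "cfun X = {f. continuous_map X euclidean f \<and> (\<forall>x. x \<notin> topspace X \<longrightarrow> f x = 0)}"

definition cnorm :: "'a topology \<Rightarrow> ('a \<Rightarrow> complex) \<Rightarrow> real" where
  "cnorm X f = Sup (insert 0 ((\<lambda>x. norm (f x)) ` topspace X))"

definition cconv :: "'a topology \<Rightarrow> (nat \<Rightarrow> 'a \<Rightarrow> complex) \<Rightarrow> ('a \<Rightarrow> complex) \<Rightarrow> bool" where
  "cconv X s g \<longleftrightarrow> g \<in> cfun X \<and> (\<forall>n. s n \<in> cfun X) \<and>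
      (\<lambda>n. cnorm X (\<lambda>x. s n x - g x)) \<longlonglongrightarrow> 0"

definition l2 :: "'a topology \<Rightarrow> (nat \<Rightarrow> 'a \<Rightarrow> complex) set" where
  "l2 X = {a. (\<forall>i. a i \<in> cfun X) \<and>
      (\<exists>g. cconv X (\<lambda>n x. \<Sum>i<n. cnj (a i x) * a i x) g)}"

text \<open>C(X)-valued inner product sum_i a_i^* b_i (its norm limit, computed pointwise).\<close>
definition l2inner :: "(nat \<Rightarrow> 'a \<Rightarrow> complex) \<Rightarrow> (nat \<Rightarrow> 'a \<Rightarrow> complex) \<Rightarrow> 'a \<Rightarrow> complex" where
  "l2inner a b = (\<lambda>x. \<Sum>i. cnj (a i x) * b i x)"

definition l2norm :: "'a topology \<Rightarrow> (nat \<Rightarrow> 'a \<Rightarrow> complex) \<Rightarrow> real" where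
  "l2norm X a = sqrt (cnorm X (l2inner a a))"

definition l2act :: "(nat \<Rightarrow> 'a \<Rightarrow> complex) \<Rightarrow> ('a \<Rightarrow> complex) \<Rightarrow> (nat \<Rightarrow> 'a \<Rightarrow> complex)" where
  "l2act a f = (\<lambda>i x. a i x * f x)"

definition l2dual :: "'a topology \<Rightarrow> ((nat \<Rightarrow> 'a \<Rightarrow> complex) \<Rightarrow> 'a \<Rightarrow> complex) set" where
  "l2dual X = {\<tau>. (\<forall>a. a \<notin> l2 X \<longrightarrow> \<tau> a = (\<lambda>x. 0)) \<and>
      (\<forall>a\<in>l2 X. \<tau> a \<in> cfun X) \<and>
      (\<forall>a\<in>l2 X. \<forall>b\<in>l2 X. \<tau> (\<lambda>i x. a i x + b i x) = (\<lambda>x. \<tau> a x + \<tau> b x)) \<and>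
      (\<forall>a\<in>l2 X. \<forall>f\<in>cfun X. \<tau> (l2act a f) = (\<lambda>x. \<tau> a x * f x)) \<and>
      (\<exists>C. \<forall>a\<in>l2 X. cnorm X (\<tau> a) \<le> C * l2norm X a)}"

definition dnorm :: "'a topology \<Rightarrow> ((nat \<Rightarrow> 'a \<Rightarrow> complex) \<Rightarrow> 'a \<Rightarrow> complex) \<Rightarrow> real" where
  "dnorm X \<tau> = Inf {C. 0 \<le> C \<and> (\<forall>a\<in>l2 X. cnorm X (\<tau> a) \<le> C * l2norm X a)}"

text \<open>Paschke's right module structure on M': (tau . f)(a) = f^* tau(a).\<close>
definition dact :: "((nat \<Rightarrow> 'a \<Rightarrow> complex) \<Rightarrow> 'a \<Rightarrow> complex) \<Rightarrow> ('a \<Rightarrow> complex)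
    \<Rightarrow> ((nat \<Rightarrow> 'a \<Rightarrow> complex) \<Rightarrow> 'a \<Rightarrow> complex)" where
  "dact \<tau> f = (\<lambda>a x. cnj (f x) * \<tau> a x)"

definition l2bidual :: "'a topology \<Rightarrow>
    (((nat \<Rightarrow> 'a \<Rightarrow> complex) \<Rightarrow> 'a \<Rightarrow> complex) \<Rightarrow> 'a \<Rightarrow> complex) set" where
  "l2bidual X = {F. (\<forall>\<tau>\<in>l2dual X. F \<tau> \<in> cfun X) \<and>
      (\<forall>\<tau>\<in>l2dual X. \<forall>\<sigma>\<in>l2dual X. F (\<lambda>a x. \<tau> a x + \<sigma> a x) = (\<lambda>x. F \<tau> x + F \<sigma> x)) \<and>
      (\<forall>\<tau>\<in>l2dual X. \<forall>f\<in>cfun X. F (dact \<tau> f) = (\<lambda>x. F \<tau> x * f x)) \<and>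
      (\<exists>C. \<forall>\<tau>\<in>l2dual X. cnorm X (F \<tau>) \<le> C * dnorm X \<tau>)}"

definition Cstar_reflexive_C :: "'a topology \<Rightarrow> bool" where
  "Cstar_reflexive_C X \<longleftrightarrow>
     (\<forall>F\<in>l2bidual X. \<exists>a\<in>l2 X. \<forall>\<tau>\<in>l2dual X. F \<tau> = (\<lambda>x. cnj (\<tau> a x)))"

text \<open>C_0(U) as the ideal of C(X) of functions vanishing on X - U.\<close>
definition C0 :: "'a topology \<Rightarrow> 'a set \<Rightarrow> ('a \<Rightarrow> complex) set" where
  "C0 X U = {f\<in>cfun X. \<forall>x\<in>topspace X - U. f x = 0}"

definition prod_canon_incl :: "'a topology \<Rightarrow> (nat \<Rightarrow> 'a set) \<Rightarrow> bool" where
  "prod_canon_incl X U \<longleftrightarrow>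
     (\<forall>lam::nat \<Rightarrow> 'a \<Rightarrow> complex. (\<forall>k. lam k \<in> C0 X (U k)) \<and> (\<exists>B. \<forall>k. cnorm X (lam k) \<le> B) \<longrightarrow>
        (\<exists>g\<in>cfun X. (\<forall>k. \<forall>x\<in>U k. g x = lam k x) \<and>
                    (\<forall>x\<in>topspace X - X closure_of (\<Union>k. U k). g x = 0)))"

end

theory Submission
  imports Defs
begin




lemma cm_mult: "continuous_map X euclidean f \<Longrightarrow> continuous_map X euclidean g \<Longrightarrow>
   continuous_map X euclidean (\<lambda>x. f x * g x::'b::real_normed_algebra)"
  by (simp add: continuous_map_atin tendsto_mult)
lemma cm_cnj: "continuous_map X euclidean f \<Longrightarrow> continuous_map X euclidean (\<lambda>x. cnj (f x))"
  by (simp add: continuous_map_atin tendsto_cnj)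
lemma cm_of_real: "continuous_map X euclidean f \<Longrightarrow> continuous_map X euclidean (\<lambda>x. complex_of_real (f x))"
  by (simp add: continuous_map_atin tendsto_of_real)
lemma cm_divide: "continuous_map X euclidean f \<Longrightarrow> continuous_map X euclidean g \<Longrightarrow>
   (\<And>x. x \<in> topspace X \<Longrightarrow> g x \<noteq> 0) \<Longrightarrow>
   continuous_map X euclidean (\<lambda>x. f x / g x::'b::real_normed_field)"
  by (simp add: continuous_map_atin tendsto_divide)
lemma cm_power: "continuous_map X euclidean f \<Longrightarrow> continuous_map X euclidean (\<lambda>x. f x ^ n::'b::real_normed_algebra_1)"
  by (simp add: continuous_map_atin tendsto_power)
lemma cm_sum: "finite I \<Longrightarrow> (\<And>i. i \<in> I \<Longrightarrow> continuous_map X euclidean (f i)) \<Longrightarrow>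
   continuous_map X euclidean (\<lambda>x. \<Sum>i\<in>I. f i x :: 'b::real_normed_vector)"
  using continuous_map_sum[of I X "\<lambda>x i. f i x"] by simp


lemma cfunI: "continuous_map X euclidean f \<Longrightarrow> (\<And>x. x \<notin> topspace X \<Longrightarrow> f x = 0) \<Longrightarrow> f \<in> cfun X"
  by (simp add: cfun_def)
lemma cfun_cont: "f \<in> cfun X \<Longrightarrow> continuous_map X euclidean f"
  by (simp add: cfun_def)
lemma cfun_out: "f \<in> cfun X \<Longrightarrow> x \<notin> topspace X \<Longrightarrow> f x = 0"
  by (simp add: cfun_def)
lemma cfun_zero: "(\<lambda>x. 0) \<in> cfun X" by (simp add: cfun_def)
lemma cfun_add: "f \<in> cfun X \<Longrightarrow> g \<in> cfun X \<Longrightarrow> (\<lambda>x. f x + g x) \<in> cfun X"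
  by (simp add: cfun_def continuous_map_add)
lemma cfun_diff: "f \<in> cfun X \<Longrightarrow> g \<in> cfun X \<Longrightarrow> (\<lambda>x. f x - g x) \<in> cfun X"
  by (simp add: cfun_def continuous_map_diff)
lemma cfun_mult: "f \<in> cfun X \<Longrightarrow> continuous_map X euclidean g \<Longrightarrow> (\<lambda>x. f x * g x) \<in> cfun X"
  by (simp add: cfun_def cm_mult)
lemma cfun_mult2: "continuous_map X euclidean f \<Longrightarrow> g \<in> cfun X \<Longrightarrow> (\<lambda>x. f x * g x) \<in> cfun X"
  by (simp add: cfun_def cm_mult)
lemma cfun_cnj: "f \<in> cfun X \<Longrightarrow> (\<lambda>x. cnj (f x)) \<in> cfun X"
  by (simp add: cfun_def cm_cnj)
lemma cfun_sum: "finite I \<Longrightarrow> (\<And>i. i \<in> I \<Longrightarrow> f i \<in> cfun X) \<Longrightarrow> (\<lambda>x. \<Sum>i\<in>I. f i x) \<in> cfun X"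
  by (simp add: cfun_def cm_sum)
lemma cfun_ind: "(\<lambda>x. if x \<in> topspace X then c else 0) \<in> cfun X"
proof (rule cfunI)
  show "continuous_map X euclidean (\<lambda>x. if x \<in> topspace X then c else 0)"
    by (rule continuous_map_eq[of _ _ "\<lambda>x. c"]) auto
qed auto



lemma cont_bounded:
  assumes "compact_space X" "continuous_map X euclidean (f::'a \<Rightarrow> 'b::real_normed_vector)"
  shows "\<exists>B. \<forall>x\<in>topspace X. norm (f x) \<le> B"
proof -
  have "compactin euclidean (f ` topspace X)"
    using image_compactin[OF assms(1)[unfolded compact_space_def] assms(2)] .
  then have "bounded (f ` topspace X)" using compact_imp_bounded compactin_euclidean_iff by blast
  then show ?thesis by (auto simp: bounded_iff)
qed

lemma cnorm_ge_gen:
  assumes "\<forall>x\<in>topspace X. norm (f x) \<le> B" "x \<in> topspace X"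
  shows "norm (f x) \<le> cnorm X f"
proof -
  have "bdd_above (insert 0 ((\<lambda>x. norm (f x)) ` topspace X))"
    using assms(1) by (intro bdd_aboveI[of _ "max 0 B"]) force
  then show ?thesis unfolding cnorm_def
    by (rule cSup_upper[rotated]) (use assms(2) in blast)
qed

lemma cnorm_ge:
  assumes "compact_space X" "continuous_map X euclidean f" "x \<in> topspace X"
  shows "norm (f x) \<le> cnorm X f"
  using cont_bounded[OF assms(1,2)] by (metis cnorm_ge_gen assms(3))

lemma cnorm_nonneg_gen:
  assumes "\<forall>x\<in>topspace X. norm (f x) \<le> B"
  shows "0 \<le> cnorm X f"
proof -
  have "bdd_above (insert 0 ((\<lambda>x. norm (f x)) ` topspace X))"
    using assms(1) by (intro bdd_aboveI[of _ "max 0 B"]) force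
  then show ?thesis unfolding cnorm_def
    by (rule cSup_upper[rotated]) blast
qed

lemma cnorm_nonneg:
  assumes "compact_space X" "continuous_map X euclidean f"
  shows "0 \<le> cnorm X f"
  using cont_bounded[OF assms] by (metis cnorm_nonneg_gen)

lemma cnorm_le:
  assumes "0 \<le> M" "\<And>x. x \<in> topspace X \<Longrightarrow> norm (f x) \<le> M"
  shows "cnorm X f \<le> M"
  unfolding cnorm_def by (rule cSup_least) (use assms in auto)






definition sq :: "(nat \<Rightarrow> 'a \<Rightarrow> complex) \<Rightarrow> 'a \<Rightarrow> nat \<Rightarrow> real" where
  "sq a x i = (cmod (a i x))\<^sup>2"

definition ucauchy :: "'a topology \<Rightarrow> (nat \<Rightarrow> 'a \<Rightarrow> complex) \<Rightarrow> bool" where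
  "ucauchy X a \<longleftrightarrow> (\<forall>d>0. \<exists>N. \<forall>n\<ge>N. \<forall>m. \<forall>x\<in>topspace X. sum (sq a x) {n..<m} \<le> d)"

definition tot :: "(nat \<Rightarrow> 'a \<Rightarrow> complex) \<Rightarrow> 'a \<Rightarrow> real" where
  "tot a x = suminf (sq a x)"

lemma sq_nonneg: "0 \<le> sq a x i" by (simp add: sq_def)

lemma sum_split_lt: "n \<le> m \<Longrightarrow> sum f {..<m} = sum f {..<n} + sum f {n..<(m::nat)}"
  by (metis lessThan_atLeast0 sum.atLeastLessThan_concat zero_le)

lemma cnj_mult_self: "cnj z * z = complex_of_real ((cmod z)\<^sup>2)"
  by (metis complex_norm_square mult.commute)

lemma partial_eq: "(\<lambda>x. \<Sum>i<n. cnj (a i x) * a i x) = (\<lambda>x. complex_of_real (sum (sq a x) {..<n}))"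
  by (simp add: cnj_mult_self sq_def)

lemma uc_summable:
  assumes "ucauchy X a" "x \<in> topspace X"
  shows "summable (sq a x)"
  unfolding summable_Cauchy
proof (intro allI impI)
  fix e :: real assume "e > 0"
  then obtain N where N: "\<forall>n\<ge>N. \<forall>m. \<forall>x\<in>topspace X. sum (sq a x) {n..<m} \<le> e/2"
    using assms(1) unfolding ucauchy_def by (meson half_gt_zero)
  show "\<exists>N. \<forall>m\<ge>N. \<forall>n. norm (sum (sq a x) {m..<n}) < e"
  proof (intro exI allI impI)
    fix m n assume "N \<le> m"
    have "0 \<le> sum (sq a x) {m..<n}" by (simp add: sum_nonneg sq_nonneg)
    moreover have "sum (sq a x) {m..<n} \<le> e/2" using N \<open>N \<le> m\<close> assms(2) by auto
    ultimately show "norm (sum (sq a x) {m..<n}) < e" using \<open>e>0\<close> by simp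
  qed
qed

lemma uc_tail:
  assumes "summable (sq a x)" "\<And>m. sum (sq a x) {n..<m} \<le> d"
  shows "tot a x - sum (sq a x) {..<n} \<le> d"
proof -
  have L: "(\<lambda>m. sum (sq a x) {..<m} - sum (sq a x) {..<n}) \<longlonglongrightarrow> tot a x - sum (sq a x) {..<n}"
    unfolding tot_def by (intro tendsto_diff summable_LIMSEQ assms(1) tendsto_const)
  have "sum (sq a x) {..<m} - sum (sq a x) {..<n} \<le> d" for m
  proof (cases "n \<le> m")
    case True then show ?thesis using sum_split_lt[OF True, of "sq a x"] assms(2)[of m] by simp
  next
    case False
    then have "sum (sq a x) {..<m} \<le> sum (sq a x) {..<n}"
      by (intro sum_mono2) (auto simp: sq_nonneg)
    moreover have "0 \<le> d" using assms(2)[of n] by simp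
    ultimately show ?thesis by simp
  qed
  then show ?thesis by (intro LIMSEQ_le_const2[OF L]) auto
qed

lemma ps_le_tot: "summable (sq a x) \<Longrightarrow> sum (sq a x) {..<n} \<le> tot a x"
  unfolding tot_def by (intro sum_le_suminf) (auto simp: sq_nonneg)

lemma cfun_partial: "(\<forall>i. (a::nat\<Rightarrow>'a\<Rightarrow>complex) i \<in> cfun X) \<Longrightarrow> (\<lambda>x. \<Sum>i<n. cnj (a i x) * a i x) \<in> cfun X"
  by (rule cfun_sum) (simp_all add: cfun_mult2[OF cm_cnj[OF cfun_cont]])

lemma ucauchy_imp_l2:
  assumes cX: "compact_space X" and ac: "\<forall>i. a i \<in> cfun X" and uc: "ucauchy X a"
  shows "a \<in> l2 X" and "continuous_map X euclidean (\<lambda>x. complex_of_real (tot a x))"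
proof -
  define g where "g = (\<lambda>x. if x \<in> topspace X then complex_of_real (tot a x) else 0)"
  define s where "s = (\<lambda>n x. \<Sum>i<n. cnj (a i x) * a i x)"
  have s_eq: "s n x = complex_of_real (sum (sq a x) {..<n})" for n x
    unfolding s_def by (simp add: cnj_mult_self sq_def)
  have sc: "s n \<in> cfun X" for n unfolding s_def using cfun_partial[OF ac] .
  have bound: "\<exists>N. \<forall>n\<ge>N. \<forall>x\<in>topspace X. norm (s n x - g x) \<le> d" if "d > 0" for d
  proof -
    obtain N where N: "\<forall>n\<ge>N. \<forall>m. \<forall>x\<in>topspace X. sum (sq a x) {n..<m} \<le> d"
      using uc \<open>d>0\<close> unfolding ucauchy_def by auto
    have "norm (s n x - g x) \<le> d" if "n \<ge> N" "x \<in> topspace X" for n x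
    proof -
      have sm: "summable (sq a x)" using uc_summable[OF uc that(2)] .
      have "\<And>m. sum (sq a x) {n..<m} \<le> d" using N that by simp
      then have "tot a x - sum (sq a x) {..<n} \<le> d" by (rule uc_tail[OF sm])
      moreover have "sum (sq a x) {..<n} \<le> tot a x" using ps_le_tot[OF sm] .
      moreover have "s n x - g x = complex_of_real (sum (sq a x) {..<n} - tot a x)"
        using that(2) by (simp add: s_eq g_def)
      ultimately show ?thesis by (simp only: norm_of_real; linarith)
    qed
    then show ?thesis by auto
  qed
  have gcont: "continuous_map X euclidean g"
  proof (rule Met_TC.continuous_map_uniform_limit[where F=sequentially and f=s, simplified])
    show "\<forall>\<^sub>F n in sequentially. continuous_map X euclidean (s n)" using sc[THEN cfun_cont] by simp
    fix e :: real assume "e > 0"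
    then obtain N where N: "\<forall>n\<ge>N. \<forall>x\<in>topspace X. norm (s n x - g x) \<le> e/2"
      using bound[of "e/2"] by auto
    have "dist (s n x) (g x) < e" if "n \<ge> N" "x \<in> topspace X" for n x
      using N that \<open>e>0\<close> unfolding dist_norm by fastforce
    then show "\<forall>\<^sub>F n in sequentially. \<forall>x\<in>topspace X. dist (s n x) (g x) < e"
      unfolding eventually_sequentially by auto
  qed
  have gcfun: "g \<in> cfun X" using gcont by (intro cfunI) (auto simp: g_def)
  show "continuous_map X euclidean (\<lambda>x. complex_of_real (tot a x))"
    by (rule continuous_map_eq[OF gcont]; simp add: g_def)
  have "(\<lambda>n. cnorm X (\<lambda>x. s n x - g x)) \<longlonglongrightarrow> 0"
  proof (rule LIMSEQ_I)
    fix r :: real assume "r > 0"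
    then obtain N where N: "\<forall>n\<ge>N. \<forall>x\<in>topspace X. norm (s n x - g x) \<le> r/2"
      using bound[of "r/2"] by auto
    have "norm (cnorm X (\<lambda>x. s n x - g x) - 0) < r" if "n \<ge> N" for n
    proof -
      have "0 \<le> cnorm X (\<lambda>x. s n x - g x)" using N that by (intro cnorm_nonneg_gen[of _ _ "r/2"]) auto
      moreover have "cnorm X (\<lambda>x. s n x - g x) \<le> r/2" using N that \<open>r>0\<close> by (intro cnorm_le) auto
      ultimately show ?thesis using \<open>r>0\<close> by simp
    qed
    then show "\<exists>N. \<forall>n\<ge>N. norm (cnorm X (\<lambda>x. s n x - g x) - 0) < r" by auto
  qed
  then have "cconv X s g" using gcfun sc unfolding cconv_def by auto
  then show "a \<in> l2 X" unfolding l2_def mem_Collect_eq s_def using ac by (intro conjI exI)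
qed

lemma l2D: "a \<in> l2 X \<Longrightarrow> a i \<in> cfun X"
  by (simp add: l2_def)

lemma l2_imp_ucauchy:
  assumes cX: "compact_space X" and a: "a \<in> l2 X"
  shows "ucauchy X a"
  unfolding ucauchy_def
proof (intro allI impI)
  fix d :: real assume "d > 0"
  define s where "s = (\<lambda>n x. \<Sum>i<n. cnj (a i x) * a i x)"
  have s_eq: "s n x = complex_of_real (sum (sq a x) {..<n})" for n x
    unfolding s_def by (simp add: cnj_mult_self sq_def)
  obtain g where cc: "cconv X s g" using a unfolding l2_def s_def by auto
  then have gc: "g \<in> cfun X" and sc: "\<And>n. s n \<in> cfun X"
     and lim: "(\<lambda>n. cnorm X (\<lambda>x. s n x - g x)) \<longlonglongrightarrow> 0" unfolding cconv_def by auto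
  obtain N where N: "\<And>n. n \<ge> N \<Longrightarrow> norm (cnorm X (\<lambda>x. s n x - g x) - 0) < d"
    using LIMSEQ_D[OF lim \<open>d>0\<close>] by auto
  have pw: "norm (s n x - g x) \<le> cnorm X (\<lambda>x. s n x - g x)" if "x \<in> topspace X" for n x
    by (rule cnorm_ge[OF cX cfun_cont[OF cfun_diff[OF sc gc]] that])
  show "\<exists>N. \<forall>n\<ge>N. \<forall>m. \<forall>x\<in>topspace X. sum (sq a x) {n..<m} \<le> d"
  proof (intro exI allI impI ballI)
    fix n m x assume "N \<le> n" "x \<in> topspace X"
    have "(\<lambda>k. s k x - g x) \<longlonglongrightarrow> 0"
      by (rule Lim_null_comparison[OF _ lim]) (use pw \<open>x \<in> topspace X\<close> in auto)
    then have "(\<lambda>k. s k x) \<longlonglongrightarrow> g x" by (simp add: LIM_zero_iff)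
    then have "(\<lambda>k. Re (s k x)) \<longlonglongrightarrow> Re (g x)" by (rule tendsto_Re)
    then have L: "(\<lambda>k. sum (sq a x) {..<k}) \<longlonglongrightarrow> Re (g x)" by (simp add: s_eq)
    have inc: "incseq (\<lambda>k. sum (sq a x) {..<k})"
      by (intro monoI sum_mono2) (auto simp: sq_nonneg)
    have le: "sum (sq a x) {..<m} \<le> Re (g x)" using incseq_le[OF inc L] .
    have cn: "norm (s n x - g x) < d" using pw[OF \<open>x \<in> topspace X\<close>, of n] N[OF \<open>N \<le> n\<close>] by simp
    show "sum (sq a x) {n..<m} \<le> d"
    proof (cases "n \<le> m")
      case True
      have "sum (sq a x) {n..<m} = sum (sq a x) {..<m} - sum (sq a x) {..<n}"
        using sum_split_lt[OF True, of "sq a x"] by simp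
      also have "\<dots> \<le> Re (g x - s n x)" using le by (simp add: s_eq)
      also have "\<dots> \<le> norm (s n x - g x)"
        by (metis complex_Re_le_cmod norm_minus_commute)
      finally show ?thesis using cn by simp
    next
      case False then show ?thesis using \<open>d>0\<close> by simp
    qed
  qed
qed

lemma l2_iff:
  assumes "compact_space X"
  shows "a \<in> l2 X \<longleftrightarrow> (\<forall>i. a i \<in> cfun X) \<and> ucauchy X a"
  using l2_imp_ucauchy[OF assms] ucauchy_imp_l2(1)[OF assms] l2D by metis

lemma l2_summable: "compact_space X \<Longrightarrow> a \<in> l2 X \<Longrightarrow> x \<in> topspace X \<Longrightarrow> summable (sq a x)"
  using uc_summable l2_imp_ucauchy by metis

lemma l2_out: "a \<in> l2 X \<Longrightarrow> x \<notin> topspace X \<Longrightarrow> a i x = 0"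
  using l2D cfun_out by metis

lemma l2inner_self:
  assumes cX: "compact_space X" and a: "a \<in> l2 X"
  shows "l2inner a a x = complex_of_real (tot a x)"
proof (cases "x \<in> topspace X")
  case True
  have "l2inner a a x = (\<Sum>i. complex_of_real (sq a x i))"
    unfolding l2inner_def by (simp add: cnj_mult_self sq_def)
  also have "\<dots> = complex_of_real (tot a x)"
    unfolding tot_def by (rule suminf_of_real[symmetric, OF l2_summable[OF cX a True]])
  finally show ?thesis .
next
  case False
  have "sq a x = (\<lambda>i. 0)" by (simp add: sq_def l2_out[OF a False] fun_eq_iff)
  then show ?thesis using l2_out[OF a False] by (simp add: l2inner_def tot_def)
qed

lemma tot_nonneg: "summable (sq a x) \<Longrightarrow> 0 \<le> tot a x"
  unfolding tot_def by (intro suminf_nonneg) (auto simp: sq_nonneg)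

lemma l2_tot_cont: "compact_space X \<Longrightarrow> a \<in> l2 X \<Longrightarrow> continuous_map X euclidean (\<lambda>x. complex_of_real (tot a x))"
  using ucauchy_imp_l2(2) l2_imp_ucauchy l2D by metis

lemma l2norm_sq:
  assumes cX: "compact_space X" and a: "a \<in> l2 X"
  shows "l2norm X a = sqrt (cnorm X (\<lambda>x. complex_of_real (tot a x)))"
    and "0 \<le> cnorm X (\<lambda>x. complex_of_real (tot a x))"
    and "(l2norm X a)\<^sup>2 = cnorm X (\<lambda>x. complex_of_real (tot a x))"
    and "0 \<le> l2norm X a"
proof -
  show e: "l2norm X a = sqrt (cnorm X (\<lambda>x. complex_of_real (tot a x)))"
    unfolding l2norm_def using l2inner_self[OF cX a] by presburger
  show nn: "0 \<le> cnorm X (\<lambda>x. complex_of_real (tot a x))"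
    by (rule cnorm_nonneg[OF cX l2_tot_cont[OF cX a]])
  show "(l2norm X a)\<^sup>2 = cnorm X (\<lambda>x. complex_of_real (tot a x))" using e nn by simp
  show "0 \<le> l2norm X a" using e nn by simp
qed

lemma tot_le_l2norm:
  assumes cX: "compact_space X" and a: "a \<in> l2 X" and x: "x \<in> topspace X"
  shows "tot a x \<le> (l2norm X a)\<^sup>2"
proof -
  have "tot a x = norm (complex_of_real (tot a x))" using tot_nonneg[OF l2_summable[OF cX a x]] by simp
  also have "\<dots> \<le> cnorm X (\<lambda>x. complex_of_real (tot a x))"
    by (rule cnorm_ge[OF cX l2_tot_cont[OF cX a] x])
  finally show ?thesis using l2norm_sq(3)[OF cX a] by simp
qed

lemma ps_le_l2norm:
  assumes cX: "compact_space X" and a: "a \<in> l2 X" and x: "x \<in> topspace X"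
  shows "sum (sq a x) {..<n} \<le> (l2norm X a)\<^sup>2"
  using order_trans[OF ps_le_tot[OF l2_summable[OF cX a x]] tot_le_l2norm[OF assms]] .

lemma coord_le_l2norm:
  assumes cX: "compact_space X" and a: "a \<in> l2 X" and x: "x \<in> topspace X"
  shows "cmod (a i x) \<le> l2norm X a"
proof -
  have "sq a x i \<le> sum (sq a x) {..<Suc i}"
    by (rule member_le_sum) (auto simp: sq_nonneg)
  also have "\<dots> \<le> (l2norm X a)\<^sup>2" by (rule ps_le_l2norm[OF assms])
  finally have "(cmod (a i x))\<^sup>2 \<le> (l2norm X a)\<^sup>2" by (simp add: sq_def)
  then show ?thesis using l2norm_sq(4)[OF cX a] by (rule power2_le_imp_le)
qed

lemma l2norm_le:
  assumes cX: "compact_space X" and a: "a \<in> l2 X" and M: "0 \<le> M"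
    and b: "\<And>x n. x \<in> topspace X \<Longrightarrow> sum (sq a x) {..<n} \<le> M"
  shows "l2norm X a \<le> sqrt M"
proof -
  have "cnorm X (\<lambda>x. complex_of_real (tot a x)) \<le> M"
  proof (rule cnorm_le[OF M])
    fix x assume x: "x \<in> topspace X"
    have "tot a x \<le> M" unfolding tot_def
      by (rule suminf_le_const[OF l2_summable[OF cX a x]]) (use b x in auto)
    then show "cmod (complex_of_real (tot a x)) \<le> M" using tot_nonneg[OF l2_summable[OF cX a x]] by simp
  qed
  then show ?thesis using l2norm_sq(1)[OF cX a] by simp
qed




lemma CS_complex:
  fixes u v :: "nat \<Rightarrow> complex"
  shows "norm (\<Sum>i\<in>I. u i * v i) \<le> sqrt (\<Sum>i\<in>I. (cmod (u i))\<^sup>2) * sqrt (\<Sum>i\<in>I. (cmod (v i))\<^sup>2)"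
proof -
  have "norm (\<Sum>i\<in>I. u i * v i) \<le> (\<Sum>i\<in>I. cmod (u i) * cmod (v i))"
    by (rule order_trans[OF norm_sum]) (simp add: norm_mult)
  also have "\<dots> \<le> sqrt ((\<Sum>i\<in>I. (cmod (u i))\<^sup>2) * (\<Sum>i\<in>I. (cmod (v i))\<^sup>2))"
    by (rule real_le_rsqrt) (rule Cauchy_Schwarz_ineq_sum)
  also have "\<dots> = sqrt (\<Sum>i\<in>I. (cmod (u i))\<^sup>2) * sqrt (\<Sum>i\<in>I. (cmod (v i))\<^sup>2)"
    by (simp add: real_sqrt_mult)
  finally show ?thesis .
qed

lemma sq_add_le: "(cmod (u + v))\<^sup>2 \<le> 2 * ((cmod u)\<^sup>2 + (cmod v)\<^sup>2)"
proof -
  have "cmod (u + v) \<le> cmod u + cmod v" by (rule norm_triangle_ineq)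
  then have "(cmod (u + v))\<^sup>2 \<le> (cmod u + cmod v)\<^sup>2" by (simp add: power_mono)
  also have "\<dots> \<le> 2 * ((cmod u)\<^sup>2 + (cmod v)\<^sup>2)"
    by (smt (verit, best) sum_squares_bound sum_power2_ge_zero power2_sum)
  finally show ?thesis .
qed

lemma uc_dom:
  assumes ua: "ucauchy X a" and uc: "ucauchy X c" and K: "0 \<le> K"
    and dom: "\<And>x i. x \<in> topspace X \<Longrightarrow> sq b x i \<le> K * (sq a x i + sq c x i)"
  shows "ucauchy X b"
  unfolding ucauchy_def
proof (intro allI impI)
  fix d :: real assume "d > 0"
  define e where "e = d / (2 * (K + 1))"
  have e: "e > 0" using \<open>d>0\<close> K by (simp add: e_def)
  obtain N1 where N1: "\<forall>n\<ge>N1. \<forall>m. \<forall>x\<in>topspace X. sum (sq a x) {n..<m} \<le> e"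
    using ua e unfolding ucauchy_def by auto
  obtain N2 where N2: "\<forall>n\<ge>N2. \<forall>m. \<forall>x\<in>topspace X. sum (sq c x) {n..<m} \<le> e"
    using uc e unfolding ucauchy_def by auto
  have "sum (sq b x) {n..<m} \<le> d" if "n \<ge> max N1 N2" "x \<in> topspace X" for n m x
  proof -
    have "sum (sq b x) {n..<m} \<le> sum (\<lambda>i. K * (sq a x i + sq c x i)) {n..<m}"
      by (rule sum_mono) (rule dom[OF that(2)])
    also have "\<dots> = K * (sum (sq a x) {n..<m} + sum (sq c x) {n..<m})"
      by (simp add: sum_distrib_left[symmetric] sum.distrib)
    also have "\<dots> \<le> K * (e + e)"
      using N1 N2 that K by (intro mult_left_mono add_mono) auto
    also have "\<dots> = d * (K / (K + 1))"
    proof -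
      have K1: "K + 1 \<noteq> 0" using K by simp
      have "e + e = d / (K + 1)" unfolding e_def using K1 by (simp add: divide_simps)
      then show ?thesis by simp
    qed
    also have "\<dots> \<le> d * 1" using K \<open>d>0\<close> by (intro mult_left_mono) auto
    finally show ?thesis by simp
  qed
  then show "\<exists>N. \<forall>n\<ge>N. \<forall>m. \<forall>x\<in>topspace X. sum (sq b x) {n..<m} \<le> d"
    by (intro exI[of _ "max N1 N2"]) auto
qed

lemma uc_finite:
  assumes "\<And>i x. i \<ge> N0 \<Longrightarrow> b i x = 0"
  shows "ucauchy X b"
  unfolding ucauchy_def
proof (intro allI impI exI[of _ N0] ballI)
  fix d :: real and n m x assume "d > 0" "N0 \<le> n"
  have "sum (sq b x) {n..<m} = 0" using assms \<open>N0 \<le> n\<close> by (intro sum.neutral) (auto simp: sq_def)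
  then show "sum (sq b x) {n..<m} \<le> d" using \<open>d>0\<close> by simp
qed

lemma l2_add:
  assumes cX: "compact_space X" and a: "a \<in> l2 X" and b: "b \<in> l2 X"
  shows "(\<lambda>i x. a i x + b i x) \<in> l2 X"
proof -
  have "ucauchy X (\<lambda>i x. a i x + b i x)"
    by (rule uc_dom[OF l2_imp_ucauchy[OF cX a] l2_imp_ucauchy[OF cX b], of 2])
       (use sq_add_le in \<open>auto simp: sq_def\<close>)
  moreover have "\<forall>i. (\<lambda>x. a i x + b i x) \<in> cfun X" using a b by (auto intro: cfun_add l2D)
  ultimately show ?thesis using l2_iff[OF cX] by auto
qed

lemma cfun_bound: "compact_space X \<Longrightarrow> f \<in> cfun X \<Longrightarrow> \<exists>B\<ge>0. \<forall>x. cmod (f x) \<le> B"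
proof -
  assume cX: "compact_space X" and f: "f \<in> cfun X"
  obtain B where B: "\<forall>x\<in>topspace X. cmod (f x) \<le> B" using cont_bounded[OF cX cfun_cont[OF f]] by auto
  have "cmod (f x) \<le> max B 0" for x
    by (cases "x \<in> topspace X") (use B cfun_out[OF f] in auto)
  then show ?thesis by (intro exI[of _ "max B 0"]) auto
qed

lemma l2_act:
  assumes cX: "compact_space X" and a: "a \<in> l2 X" and f: "f \<in> cfun X"
  shows "l2act a f \<in> l2 X"
proof -
  obtain B where B: "B \<ge> 0" "\<And>x. cmod (f x) \<le> B" using cfun_bound[OF cX f] by auto
  have "sq (l2act a f) x i \<le> B\<^sup>2 * (sq a x i + sq a x i)" for x i
  proof -
    have "sq (l2act a f) x i = (cmod (a i x))\<^sup>2 * (cmod (f x))\<^sup>2"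
      by (simp add: sq_def l2act_def norm_mult power_mult_distrib)
    also have "\<dots> \<le> (cmod (a i x))\<^sup>2 * B\<^sup>2"
      using B by (intro mult_left_mono power_mono) auto
    also have "\<dots> \<le> B\<^sup>2 * (sq a x i + sq a x i)" by (simp add: sq_def)
    finally show ?thesis .
  qed
  then have "ucauchy X (l2act a f)"
    by (intro uc_dom[OF l2_imp_ucauchy[OF cX a] l2_imp_ucauchy[OF cX a], of "B\<^sup>2"]) auto
  moreover have "\<forall>i. l2act a f i \<in> cfun X"
    using a f unfolding l2act_def by (auto intro: cfun_mult l2D cfun_cont)
  ultimately show ?thesis using l2_iff[OF cX] by auto
qed

lemma l2_restrict:
  assumes cX: "compact_space X" and a: "a \<in> l2 X"
  shows "(\<lambda>i x. if P i then a i x else 0) \<in> l2 X"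
proof -
  have "ucauchy X (\<lambda>i x. if P i then a i x else 0)"
    by (rule uc_dom[OF l2_imp_ucauchy[OF cX a] l2_imp_ucauchy[OF cX a], of 1]) (auto simp: sq_def)
  moreover have "\<forall>i. (\<lambda>x. if P i then a i x else 0) \<in> cfun X"
  proof
    fix i show "(\<lambda>x. if P i then a i x else 0) \<in> cfun X"
      by (cases "P i") (simp_all add: l2D[OF a] cfun_zero)
  qed
  ultimately show ?thesis using l2_iff[OF cX] by auto
qed

lemma l2_zero: "compact_space X \<Longrightarrow> (\<lambda>i x. 0) \<in> l2 X"
  using l2_iff[of X "\<lambda>i x. 0"] uc_finite[of 0 "\<lambda>i x. 0" X] cfun_zero by auto

lemma l2_fin:
  assumes cX: "compact_space X" and "\<And>i. b i \<in> cfun X" and "\<And>i x. i \<ge> N0 \<Longrightarrow> b i x = 0"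
  shows "b \<in> l2 X"
  using l2_iff[OF cX] uc_finite[OF assms(3)] assms(2) by auto




lemma cnorm_add:
  assumes cX: "compact_space X" "continuous_map X euclidean f" "continuous_map X euclidean g"
  shows "cnorm X (\<lambda>x. f x + g x) \<le> cnorm X f + cnorm X g"
proof (rule cnorm_le)
  show "0 \<le> cnorm X f + cnorm X g" using cnorm_nonneg assms by (metis add_nonneg_nonneg)
  fix x assume x: "x \<in> topspace X"
  have "cmod (f x + g x) \<le> cmod (f x) + cmod (g x)" by (rule norm_triangle_ineq)
  also have "\<dots> \<le> cnorm X f + cnorm X g"
    using cnorm_ge[OF cX(1) cX(2) x] cnorm_ge[OF cX(1) cX(3) x] by linarith
  finally show "cmod (f x + g x) \<le> cnorm X f + cnorm X g" .
qed

lemma cnorm_mult_bound: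
  assumes cX: "compact_space X" "continuous_map X euclidean g" and B: "0 \<le> B" "\<And>x. x \<in> topspace X \<Longrightarrow> cmod (f x) \<le> B"
  shows "cnorm X (\<lambda>x. f x * g x) \<le> B * cnorm X g"
proof (rule cnorm_le)
  show "0 \<le> B * cnorm X g" using cnorm_nonneg[OF cX] B by simp
  fix x assume x: "x \<in> topspace X"
  have "cmod (f x * g x) = cmod (f x) * cmod (g x)" by (simp add: norm_mult)
  also have "\<dots> \<le> B * cnorm X g"
    using cnorm_ge[OF cX x] B(2)[OF x] B(1) by (intro mult_mono) auto
  finally show "cmod (f x * g x) \<le> B * cnorm X g" .
qed

lemma l2dualI:
  assumes "\<And>a. a \<notin> l2 X \<Longrightarrow> \<tau> a = (\<lambda>x. 0)"
    and "\<And>a. a \<in> l2 X \<Longrightarrow> \<tau> a \<in> cfun X"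
    and "\<And>a b. a \<in> l2 X \<Longrightarrow> b \<in> l2 X \<Longrightarrow> \<tau> (\<lambda>i x. a i x + b i x) = (\<lambda>x. \<tau> a x + \<tau> b x)"
    and "\<And>a f. a \<in> l2 X \<Longrightarrow> f \<in> cfun X \<Longrightarrow> \<tau> (l2act a f) = (\<lambda>x. \<tau> a x * f x)"
    and "\<And>a. a \<in> l2 X \<Longrightarrow> cnorm X (\<tau> a) \<le> C * l2norm X a"
  shows "\<tau> \<in> l2dual X"
proof -
  have "\<exists>C. \<forall>a\<in>l2 X. cnorm X (\<tau> a) \<le> C * l2norm X a" using assms(5) by auto
  then show ?thesis unfolding l2dual_def using assms(1-4) by auto
qed

lemma l2dualD:
  assumes "\<tau> \<in> l2dual X"
  shows "\<And>a. a \<notin> l2 X \<Longrightarrow> \<tau> a = (\<lambda>x. 0)"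
    and "\<And>a. a \<in> l2 X \<Longrightarrow> \<tau> a \<in> cfun X"
    and "\<And>a b. a \<in> l2 X \<Longrightarrow> b \<in> l2 X \<Longrightarrow> \<tau> (\<lambda>i x. a i x + b i x) = (\<lambda>x. \<tau> a x + \<tau> b x)"
    and "\<And>a f. a \<in> l2 X \<Longrightarrow> f \<in> cfun X \<Longrightarrow> \<tau> (l2act a f) = (\<lambda>x. \<tau> a x * f x)"
    and "\<exists>C. \<forall>a\<in>l2 X. cnorm X (\<tau> a) \<le> C * l2norm X a"
  using assms unfolding l2dual_def by auto

lemma dual_bound:
  assumes cX: "compact_space X" and t: "\<tau> \<in> l2dual X"
  obtains C where "C \<ge> 0" "\<And>a. a \<in> l2 X \<Longrightarrow> cnorm X (\<tau> a) \<le> C * l2norm X a"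
proof -
  obtain C where C: "\<forall>a\<in>l2 X. cnorm X (\<tau> a) \<le> C * l2norm X a" using l2dualD(5)[OF t] by auto
  have "cnorm X (\<tau> a) \<le> max C 0 * l2norm X a" if "a \<in> l2 X" for a
  proof -
    have "C * l2norm X a \<le> max C 0 * l2norm X a"
      using l2norm_sq(4)[OF cX that] by (intro mult_right_mono) auto
    then show ?thesis using C that by auto
  qed
  then show ?thesis using that[of "max C 0"] by auto
qed

lemma cnorm_zero: "cnorm X (\<lambda>x. 0) \<le> 0"
  by (rule cnorm_le) auto

lemma dual_zero: "(\<lambda>a x. 0) \<in> l2dual X"
  by (rule l2dualI[where C=0]) (auto simp: cfun_zero cnorm_zero)

lemma dual_add:
  assumes cX: "compact_space X" and s: "\<sigma> \<in> l2dual X" and t: "\<tau> \<in> l2dual X"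
  shows "(\<lambda>a x. \<sigma> a x + \<tau> a x) \<in> l2dual X"
proof -
  obtain C1 where C1: "\<And>a. a \<in> l2 X \<Longrightarrow> cnorm X (\<sigma> a) \<le> C1 * l2norm X a" using dual_bound[OF cX s] by auto
  obtain C2 where C2: "\<And>a. a \<in> l2 X \<Longrightarrow> cnorm X (\<tau> a) \<le> C2 * l2norm X a" using dual_bound[OF cX t] by auto
  show ?thesis
  proof (rule l2dualI[where C="C1 + C2"])
    fix a assume a: "a \<in> l2 X"
    have "cnorm X (\<lambda>x. \<sigma> a x + \<tau> a x) \<le> cnorm X (\<sigma> a) + cnorm X (\<tau> a)"
      by (rule cnorm_add[OF cX cfun_cont[OF l2dualD(2)[OF s a]] cfun_cont[OF l2dualD(2)[OF t a]]])
    also have "\<dots> \<le> (C1 + C2) * l2norm X a" using C1[OF a] C2[OF a] by (simp add: distrib_right)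
    finally show "cnorm X (\<lambda>x. \<sigma> a x + \<tau> a x) \<le> (C1 + C2) * l2norm X a" .
  qed (auto simp: l2dualD[OF s] l2dualD[OF t] cfun_add algebra_simps)
qed

lemma dual_dact:
  assumes cX: "compact_space X" and t: "\<tau> \<in> l2dual X" and f: "f \<in> cfun X"
  shows "dact \<tau> f \<in> l2dual X"
proof -
  obtain C where C: "C \<ge> 0" "\<And>a. a \<in> l2 X \<Longrightarrow> cnorm X (\<tau> a) \<le> C * l2norm X a" using dual_bound[OF cX t] by auto
  obtain B where B: "B \<ge> 0" "\<And>x. cmod (f x) \<le> B" using cfun_bound[OF cX f] by auto
  show ?thesis unfolding dact_def
  proof (rule l2dualI[where C="B * C"])
    fix a assume a: "a \<in> l2 X"
    have "cnorm X (\<lambda>x. cnj (f x) * \<tau> a x) \<le> B * cnorm X (\<tau> a)"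
      by (rule cnorm_mult_bound[OF cX cfun_cont[OF l2dualD(2)[OF t a]] B(1)]) (use B(2) in simp)
    also have "\<dots> \<le> B * (C * l2norm X a)" using C(2)[OF a] B(1) by (rule mult_left_mono)
    finally show "cnorm X (\<lambda>x. cnj (f x) * \<tau> a x) \<le> B * C * l2norm X a" by (simp add: mult.assoc)
  next
    fix a assume a: "a \<in> l2 X"
    show "(\<lambda>x. cnj (f x) * \<tau> a x) \<in> cfun X"
      by (rule cfun_mult2[OF cm_cnj[OF cfun_cont[OF f]] l2dualD(2)[OF t a]])
  qed (auto simp: l2dualD[OF t] algebra_simps)
qed

definition proj :: "'a topology \<Rightarrow> nat \<Rightarrow> (nat \<Rightarrow> 'a \<Rightarrow> complex) \<Rightarrow> 'a \<Rightarrow> complex" where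
  "proj X i = (\<lambda>a. if a \<in> l2 X then a i else (\<lambda>x. 0))"

lemma proj_dual:
  assumes cX: "compact_space X"
  shows "proj X i \<in> l2dual X"
  unfolding proj_def
proof (rule l2dualI[where C=1])
  fix a assume a: "a \<in> l2 X"
  show "cnorm X (if a \<in> l2 X then a i else (\<lambda>x. 0)) \<le> 1 * l2norm X a"
    using a by (simp add: cnorm_le l2norm_sq(4)[OF cX a] coord_le_l2norm[OF cX a])
next
  fix a f assume a: "a \<in> l2 X" and f: "f \<in> cfun X"
  show "(if l2act a f \<in> l2 X then l2act a f i else (\<lambda>x. 0)) =
        (\<lambda>x. (if a \<in> l2 X then a i else (\<lambda>x. 0)) x * f x)"
    using l2_act[OF cX a f] a by (simp add: l2act_def)
next
  fix a b assume a: "a \<in> l2 X" and b: "b \<in> l2 X"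
  show "(if (\<lambda>i x. a i x + b i x) \<in> l2 X then (\<lambda>i x. a i x + b i x) i else (\<lambda>x. 0)) =
        (\<lambda>x. (if a \<in> l2 X then a i else (\<lambda>x. 0)) x + (if b \<in> l2 X then b i else (\<lambda>x. 0)) x)"
    using l2_add[OF cX a b] a b by simp
qed (auto simp: l2D)

definition dcomb :: "'a topology \<Rightarrow> nat set \<Rightarrow> (nat \<Rightarrow> 'a \<Rightarrow> complex) \<Rightarrow> (nat \<Rightarrow> 'a \<Rightarrow> complex) \<Rightarrow> 'a \<Rightarrow> complex" where
  "dcomb X I \<gamma> = (\<lambda>a. if a \<in> l2 X then (\<lambda>x. \<Sum>i\<in>I. \<gamma> i x * a i x) else (\<lambda>x. 0))"

lemma dcomb_insert:
  "i \<notin> I \<Longrightarrow> finite I \<Longrightarrow> dcomb X (insert i I) \<gamma> = (\<lambda>a x. dcomb X I \<gamma> a x + dact (proj X i) (\<lambda>x. cnj (\<gamma> i x)) a x)"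
  by (auto simp: dcomb_def dact_def proj_def fun_eq_iff)

lemma dcomb_empty: "dcomb X {} \<gamma> = (\<lambda>a x. 0)"
  by (auto simp: dcomb_def fun_eq_iff)


lemma F_add: "F \<in> l2bidual X \<Longrightarrow> \<sigma> \<in> l2dual X \<Longrightarrow> \<tau> \<in> l2dual X \<Longrightarrow> F (\<lambda>a x. \<sigma> a x + \<tau> a x) = (\<lambda>x. F \<sigma> x + F \<tau> x)"
  unfolding l2bidual_def by auto

lemma F_zero:
  assumes F: "F \<in> l2bidual X"
  shows "F (\<lambda>a x. 0) = (\<lambda>x. 0)"
proof -
  have "F (\<lambda>a x. (0::complex) + 0) = (\<lambda>x. F (\<lambda>a x. 0) x + F (\<lambda>a x. 0) x)"
    by (rule F_add[OF F dual_zero dual_zero])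
  then show ?thesis by (simp add: fun_eq_iff)
qed

lemma F_dact: "F \<in> l2bidual X \<Longrightarrow> \<tau> \<in> l2dual X \<Longrightarrow> f \<in> cfun X \<Longrightarrow> F (dact \<tau> f) = (\<lambda>x. F \<tau> x * f x)"
  unfolding l2bidual_def by auto

lemma F_cfun: "F \<in> l2bidual X \<Longrightarrow> \<tau> \<in> l2dual X \<Longrightarrow> F \<tau> \<in> cfun X"
  unfolding l2bidual_def by auto

lemma dcomb_dual_F:
  assumes cX: "compact_space X" and I: "finite I" and g: "\<And>i. i \<in> I \<Longrightarrow> \<gamma> i \<in> cfun X"
  shows "dcomb X I \<gamma> \<in> l2dual X \<and>
    (\<forall>F\<in>l2bidual X. F (dcomb X I \<gamma>) = (\<lambda>x. \<Sum>i\<in>I. F (proj X i) x * cnj (\<gamma> i x)))"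
  using I g
proof (induction I rule: finite_induct)
  case empty
  then show ?case using F_zero[of _ X] by (simp add: dcomb_empty dual_zero)
next
  case (insert i I)
  have IH: "dcomb X I \<gamma> \<in> l2dual X" "\<forall>F\<in>l2bidual X. F (dcomb X I \<gamma>) = (\<lambda>x. \<Sum>i\<in>I. F (proj X i) x * cnj (\<gamma> i x))"
    using insert by auto
  have gi: "(\<lambda>x. cnj (\<gamma> i x)) \<in> cfun X" using insert.prems by (simp add: cfun_cnj)
  have d2: "dact (proj X i) (\<lambda>x. cnj (\<gamma> i x)) \<in> l2dual X" by (rule dual_dact[OF cX proj_dual[OF cX] gi])
  show ?case
  proof
    show "dcomb X (insert i I) \<gamma> \<in> l2dual X"
      unfolding dcomb_insert[OF insert(2,1)] by (rule dual_add[OF cX IH(1) d2])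
    show "\<forall>F\<in>l2bidual X. F (dcomb X (insert i I) \<gamma>) = (\<lambda>x. \<Sum>i\<in>insert i I. F (proj X i) x * cnj (\<gamma> i x))"
    proof
      fix F assume F: "F \<in> l2bidual X"
      show "F (dcomb X (insert i I) \<gamma>) = (\<lambda>x. \<Sum>i\<in>insert i I. F (proj X i) x * cnj (\<gamma> i x))"
        unfolding dcomb_insert[OF insert(2,1)] F_add[OF F IH(1) d2] F_dact[OF F proj_dual[OF cX] gi]
        using IH(2) F insert(1,2) by (simp add: fun_eq_iff add.commute)
    qed
  qed
qed

lemma dnorm_le:
  assumes "0 \<le> D" "\<And>a. a \<in> l2 X \<Longrightarrow> cnorm X (\<tau> a) \<le> D * l2norm X a"
  shows "dnorm X \<tau> \<le> D"
  unfolding dnorm_def by (rule cInf_lower) (use assms in \<open>auto intro: bdd_belowI[of _ 0]\<close>)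

lemma dnorm_nonneg:
  assumes cX: "compact_space X" and t: "\<tau> \<in> l2dual X"
  shows "0 \<le> dnorm X \<tau>"
proof -
  obtain C where C: "C \<ge> 0" "\<And>a. a \<in> l2 X \<Longrightarrow> cnorm X (\<tau> a) \<le> C * l2norm X a" using dual_bound[OF cX t] by auto
  show ?thesis unfolding dnorm_def by (rule cInf_greatest) (use C in auto)
qed

lemma F_bound:
  assumes cX: "compact_space X" and F: "F \<in> l2bidual X"
  obtains C where "C \<ge> 0" "\<And>\<tau>. \<tau> \<in> l2dual X \<Longrightarrow> cnorm X (F \<tau>) \<le> C * dnorm X \<tau>"
proof -
  obtain C where C: "\<forall>\<tau>\<in>l2dual X. cnorm X (F \<tau>) \<le> C * dnorm X \<tau>" using F unfolding l2bidual_def by auto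
  have "cnorm X (F \<tau>) \<le> max C 0 * dnorm X \<tau>" if "\<tau> \<in> l2dual X" for \<tau>
  proof -
    have "C * dnorm X \<tau> \<le> max C 0 * dnorm X \<tau>"
      using dnorm_nonneg[OF cX that] by (intro mult_right_mono) auto
    then show ?thesis using C that by auto
  qed
  then show ?thesis using that[of "max C 0"] by auto
qed

lemma dnorm_dcomb:
  assumes cX: "compact_space X" and I: "finite I" and M: "0 \<le> M"
    and b: "\<And>x. x \<in> topspace X \<Longrightarrow> (\<Sum>i\<in>I. (cmod (\<gamma> i x))\<^sup>2) \<le> M"
  shows "dnorm X (dcomb X I \<gamma>) \<le> sqrt M"
proof (rule dnorm_le)
  show "0 \<le> sqrt M" using M by simp
  fix a assume a: "a \<in> l2 X"
  obtain n where n: "I \<subseteq> {..<n}" using I by (meson finite_nat_iff_bounded)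
  show "cnorm X (dcomb X I \<gamma> a) \<le> sqrt M * l2norm X a"
  proof (rule cnorm_le)
    show "0 \<le> sqrt M * l2norm X a" using M l2norm_sq(4)[OF cX a] by simp
    fix x assume x: "x \<in> topspace X"
    have "cmod (dcomb X I \<gamma> a x) = cmod (\<Sum>i\<in>I. \<gamma> i x * a i x)" using a by (simp add: dcomb_def)
    also have "\<dots> \<le> sqrt (\<Sum>i\<in>I. (cmod (\<gamma> i x))\<^sup>2) * sqrt (\<Sum>i\<in>I. (cmod (a i x))\<^sup>2)"
      by (rule CS_complex)
    also have "\<dots> \<le> sqrt M * l2norm X a"
    proof (intro mult_mono)
      show "sqrt (\<Sum>i\<in>I. (cmod (\<gamma> i x))\<^sup>2) \<le> sqrt M" using b[OF x] by simp
      have "(\<Sum>i\<in>I. (cmod (a i x))\<^sup>2) \<le> sum (sq a x) {..<n}"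
        unfolding sq_def by (rule sum_mono2) (use n in auto)
      also have "\<dots> \<le> (l2norm X a)\<^sup>2" by (rule ps_le_l2norm[OF cX a x])
      finally show "sqrt (\<Sum>i\<in>I. (cmod (a i x))\<^sup>2) \<le> l2norm X a"
        using l2norm_sq(4)[OF cX a] real_le_lsqrt by (simp add: real_sqrt_le_iff)
    qed (use M in \<open>auto intro: sum_nonneg\<close>)
    finally show "cmod (dcomb X I \<gamma> a x) \<le> sqrt M * l2norm X a" .
  qed
qed




lemma urysohn_cfun:
  assumes cX: "compact_space X" and hX: "Hausdorff_space X" and V: "openin X V" and x: "x \<in> V"
  obtains f where "f \<in> cfun X" "f x = 1" "\<And>y. y \<notin> V \<Longrightarrow> f y = 0" "\<And>y. cnj (f y) = f y"
    "\<And>y. cmod (f y) \<le> 1"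
proof -
  have nX: "normal_space X" using compact_Hausdorff_or_regular_imp_normal_space cX hX by metis
  have xT: "x \<in> topspace X" using V x openin_subset by fastforce
  have c1: "closedin X (topspace X - V)" using V by (simp add: closedin_diff)
  have c2: "closedin X {x}" using closedin_t1_singleton[OF Hausdorff_imp_t1_space[OF hX] xT] .
  have dj: "disjnt (topspace X - V) {x}" using x by (simp add: disjnt_def)
  obtain r where r: "continuous_map X (top_of_set {0..1}) r" "r ` (topspace X - V) \<subseteq> {0}" "r ` {x} \<subseteq> {1::real}"
    using Urysohn_lemma[OF nX c1 c2 dj, of 0 1] by auto
  have rc: "continuous_map X euclidean r" and rr: "\<And>y. y \<in> topspace X \<Longrightarrow> r y \<in> {0..1}"
    using r(1) unfolding continuous_map_in_subtopology by auto
  define f where "f = (\<lambda>y. if y \<in> topspace X then complex_of_real (r y) else 0)"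
  have "continuous_map X euclidean f"
    by (rule continuous_map_eq[OF cm_of_real[OF rc]]) (simp add: f_def)
  then have "f \<in> cfun X" by (rule cfunI) (simp add: f_def)
  moreover have "f x = 1" using r(3) xT by (simp add: f_def)
  moreover have "f y = 0" if "y \<notin> V" for y using r(2) that by (auto simp: f_def)
  moreover have "cnj (f y) = f y" for y by (simp add: f_def)
  moreover have "cmod (f y) \<le> 1" for y using rr[of y] by (auto simp: f_def)
  ultimately show ?thesis using that by blast
qed

lemma sum_cnj_self: "(\<Sum>i\<in>I. z i * cnj (z i)) = complex_of_real (\<Sum>i\<in>I. (cmod (z i))\<^sup>2)"
  by (simp only: of_real_sum complex_norm_square)

lemma c_bounded:
  assumes cX: "compact_space X" and F: "F \<in> l2bidual X"
  obtains K where "K \<ge> 0" "\<And>x n. x \<in> topspace X \<Longrightarrow> sum (sq (\<lambda>i. F (proj X i)) x) {..<n} \<le> K"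
proof -
  define c where "c = (\<lambda>i. F (proj X i))"
  have cc: "c i \<in> cfun X" for i unfolding c_def by (rule F_cfun[OF F proj_dual[OF cX]])
  obtain C where C: "C \<ge> 0" "\<And>\<tau>. \<tau> \<in> l2dual X \<Longrightarrow> cnorm X (F \<tau>) \<le> C * dnorm X \<tau>"
    using F_bound[OF cX F] by auto
  have "sum (sq c x) {..<n} \<le> C\<^sup>2" if x: "x \<in> topspace X" for x n
  proof -
    define S where "S = (\<lambda>x. sum (sq c x) {..<n})"
    have dd: "dcomb X {..<n} c \<in> l2dual X \<and>
      (\<forall>F\<in>l2bidual X. F (dcomb X {..<n} c) = (\<lambda>x. \<Sum>i\<in>{..<n}. F (proj X i) x * cnj (c i x)))"
      by (rule dcomb_dual_F[OF cX]) (auto simp: cc)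
    have FS: "F (dcomb X {..<n} c) = (\<lambda>x. complex_of_real (S x))"
      using dd F unfolding S_def c_def sq_def by (simp add: sum_cnj_self)
    define M where "M = cnorm X (\<lambda>x. complex_of_real (S x))"
    have Fc: "F (dcomb X {..<n} c) \<in> cfun X" using F_cfun[OF F] dd by auto
    then have Scont: "continuous_map X euclidean (\<lambda>x. complex_of_real (S x))" using FS cfun_cont by metis
    have M0: "0 \<le> M" unfolding M_def by (rule cnorm_nonneg[OF cX Scont])
    have SM: "S y \<le> M" if "y \<in> topspace X" for y
    proof -
      have "0 \<le> S y" by (simp add: S_def sum_nonneg sq_nonneg)
      then have "S y = cmod (complex_of_real (S y))" by (simp only: norm_of_real; simp)
      also have "\<dots> \<le> M" unfolding M_def by (rule cnorm_ge[OF cX Scont that])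
      finally show ?thesis .
    qed
    have dn: "dnorm X (dcomb X {..<n} c) \<le> sqrt M"
      by (rule dnorm_dcomb[OF cX _ M0]) (use SM in \<open>auto simp: S_def sq_def\<close>)
    have "M \<le> C * sqrt M" using C(2)[OF conjunct1[OF dd]] dn C(1) unfolding FS M_def[symmetric]
      by (meson mult_left_mono order_trans)
    then have "M \<le> C\<^sup>2"
      by (metis M0 C(1) real_sqrt_le_iff real_sqrt_mult_self mult_right_le_imp_le not_less real_sqrt_gt_zero
          real_sqrt_pow2_iff real_sqrt_unique power2_eq_square mult_le_cancel_right_pos le_less)
    then show ?thesis using SM[OF x] unfolding S_def by linarith
  qed
  then show ?thesis using that[of "C\<^sup>2"] unfolding c_def by auto
qed




lemma cont_sq: "c \<in> cfun X \<Longrightarrow> continuous_map X euclidean (\<lambda>x. (cmod (c x))\<^sup>2)"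
  by (intro continuous_map_real_pow continuous_map_norm cfun_cont)

lemma cont_block: "(\<And>i. c i \<in> cfun X) \<Longrightarrow> continuous_map X euclidean (\<lambda>x. sum (sq c x) {n..<m})"
  unfolding sq_def by (intro cm_sum) (auto intro: cont_sq)

lemma canon_from_F:
  assumes cX: "compact_space X" and hX: "Hausdorff_space X" and F: "F \<in> l2bidual X"
    and K: "K \<ge> 0" "\<And>x n. x \<in> topspace X \<Longrightarrow> sum (sq c x) {..<n} \<le> K"
    and cdef: "c = (\<lambda>i. F (proj X i))"
    and e: "e > 0"
    and Uo: "\<And>k. openin X (U k)" and Ud: "\<And>i j. i \<noteq> j \<Longrightarrow> U i \<inter> U j = {}"
    and nk: "\<And>k. k \<le> nb k"
    and blk: "\<And>k x. x \<in> U k \<Longrightarrow> e \<le> sum (sq c x) {nb k..<mb k}"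
  shows "prod_canon_incl X U"
  unfolding prod_canon_incl_def
proof (intro allI impI)
  fix lam :: "nat \<Rightarrow> 'a \<Rightarrow> complex"
  assume "(\<forall>k. lam k \<in> C0 X (U k)) \<and> (\<exists>B. \<forall>k. cnorm X (lam k) \<le> B)"
  then obtain B where lC: "\<And>k. lam k \<in> C0 X (U k)" and lB: "\<And>k. cnorm X (lam k) \<le> B" by auto
  have cc: "c i \<in> cfun X" for i unfolding cdef by (rule F_cfun[OF F proj_dual[OF cX]])
  have lamc: "lam k \<in> cfun X" for k using lC[of k] by (simp add: C0_def)
  have lam0: "x \<notin> U k \<Longrightarrow> lam k x = 0" for k x
    using lC[of k] cfun_out[OF lamc] by (cases "x \<in> topspace X") (auto simp: C0_def)
  have B0: "0 \<le> B" using cnorm_nonneg[OF cX cfun_cont[OF lamc[of 0]]] lB[of 0] by linarith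
  have lamB: "cmod (lam k x) \<le> B" for k x
  proof (cases "x \<in> topspace X")
    case True then show ?thesis using cnorm_ge[OF cX cfun_cont[OF lamc[of k]] True] lB[of k] by linarith
  next
    case False then show ?thesis using cfun_out[OF lamc False] B0 by simp
  qed
  have UT: "U k \<subseteq> topspace X" for k using Uo[of k] openin_subset by metis
  define hk where "hk = (\<lambda>k x. sum (sq c x) {nb k..<mb k})"
  have hk0: "0 \<le> hk k x" for k x unfolding hk_def by (simp add: sum_nonneg sq_nonneg)
  have hkK: "hk k x \<le> K" if "x \<in> topspace X" for k x
  proof -
    have "hk k x \<le> sum (sq c x) {..<mb k}" unfolding hk_def by (rule sum_mono2) (auto simp: sq_nonneg)
    then show ?thesis using K(2)[OF that, of "mb k"] by linarith
  qed
  have hkc: "continuous_map X euclidean (hk k)" for k unfolding hk_def by (rule cont_block[OF cc])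
  define q where "q = (\<lambda>k x. lam k x / complex_of_real (max (hk k x) e))"
  have den: "complex_of_real (max (hk k x) e) \<noteq> 0" for k x using e by simp
  have qc: "q k \<in> cfun X" for k
  proof (rule cfunI)
    show "continuous_map X euclidean (q k)" unfolding q_def
      by (rule cm_divide[OF cfun_cont[OF lamc] cm_of_real[OF continuous_map_real_max[OF hkc]] den]) simp
    show "x \<notin> topspace X \<Longrightarrow> q k x = 0" for x unfolding q_def using cfun_out[OF lamc] by simp
  qed
  have qB: "cmod (q k x) \<le> B / e" for k x
  proof -
    have "cmod (q k x) = cmod (lam k x) / max (hk k x) e" unfolding q_def using e
      by (simp add: norm_divide)
    also have "\<dots> \<le> B / max (hk k x) e" using lamB e by (intro divide_right_mono) auto
    also have "\<dots> \<le> B / e" using B0 e by (intro divide_left_mono) auto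
    finally show ?thesis .
  qed
  have q0: "x \<notin> U k \<Longrightarrow> q k x = 0" for k x unfolding q_def using lam0 by simp
  have qh: "q k x * complex_of_real (hk k x) = lam k x" for k x
  proof (cases "x \<in> U k")
    case True
    then have "max (hk k x) e = hk k x" using blk[OF True] unfolding hk_def by simp
    then show ?thesis unfolding q_def using den[of k x] by simp
  next
    case False then show ?thesis using q0 lam0 by simp
  qed
  define \<gamma> where "\<gamma> = (\<lambda>k i x. cnj (q k x) * c i x)"
  have \<gamma>c: "\<gamma> k i \<in> cfun X" for k i unfolding \<gamma>_def by (rule cfun_mult2[OF cm_cnj[OF cfun_cont[OF qc]] cc])
  have \<gamma>0: "y \<notin> U k \<Longrightarrow> \<gamma> k i y = 0" for k i y unfolding \<gamma>_def using q0 by simp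
  define part where "part = (\<lambda>k. dcomb X {nb k..<mb k} (\<gamma> k))"
  have pd: "part k \<in> l2dual X \<and> (\<forall>F\<in>l2bidual X. F (part k) = (\<lambda>x. \<Sum>i\<in>{nb k..<mb k}. F (proj X i) x * cnj (\<gamma> k i x)))" for k
    unfolding part_def by (rule dcomb_dual_F[OF cX]) (auto simp: \<gamma>c)
  have Fpart: "F (part k) = lam k" for k
  proof -
    have "F (part k) = (\<lambda>x. \<Sum>i\<in>{nb k..<mb k}. c i x * cnj (\<gamma> k i x))" using pd[of k] F cdef by simp
    also have "\<dots> = (\<lambda>x. q k x * (\<Sum>i\<in>{nb k..<mb k}. c i x * cnj (c i x)))"
      unfolding \<gamma>_def by (simp add: sum_distrib_left mult_ac)
    also have "\<dots> = (\<lambda>x. q k x * complex_of_real (hk k x))"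
      unfolding hk_def sq_def by (simp only: sum_cnj_self)
    also have "\<dots> = lam k" using qh by (simp add: fun_eq_iff)
    finally show ?thesis .
  qed
  have part_l2: "a \<in> l2 X \<Longrightarrow> part k a y = (\<Sum>i\<in>{nb k..<mb k}. \<gamma> k i y * a i y)" for k a y
    unfolding part_def dcomb_def by simp
  have part_nl2: "a \<notin> l2 X \<Longrightarrow> part k a = (\<lambda>y. 0)" for k a
    unfolding part_def dcomb_def by simp
  have part0: "y \<notin> U k \<Longrightarrow> part k a y = 0" for k a y
    using \<gamma>0 by (cases "a \<in> l2 X") (simp_all add: part_l2 part_nl2)
  define idx where "idx = (\<lambda>y. SOME k. y \<in> U k)"
  have idx_eq: "y \<in> U k \<Longrightarrow> idx y = k" for y k
  proof -
    assume y: "y \<in> U k"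
    then have "y \<in> U (idx y)" unfolding idx_def by (rule someI)
    then show "idx y = k" using Ud y by auto
  qed
  define \<sigma> where "\<sigma> = (\<lambda>a. if a \<in> l2 X then (\<lambda>y. part (idx y) a y) else (\<lambda>y. 0))"
  define Cs where "Cs = B / e * sqrt K"
  have Cs0: "0 \<le> Cs" unfolding Cs_def using B0 e K(1) by simp
  have pbound: "cmod (part k a y) \<le> Cs * sqrt (sum (sq a y) {nb k..<mb k})"
    if a: "a \<in> l2 X" and y: "y \<in> topspace X" for k a y
  proof -
    have "cmod (part k a y) \<le> sqrt (\<Sum>i\<in>{nb k..<mb k}. (cmod (\<gamma> k i y))\<^sup>2) * sqrt (\<Sum>i\<in>{nb k..<mb k}. (cmod (a i y))\<^sup>2)"
      unfolding part_l2[OF a] by (rule CS_complex)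
    also have "\<dots> = sqrt (\<Sum>i\<in>{nb k..<mb k}. (cmod (\<gamma> k i y))\<^sup>2) * sqrt (sum (sq a y) {nb k..<mb k})"
      by (simp add: sq_def)
    also have "\<dots> \<le> Cs * sqrt (sum (sq a y) {nb k..<mb k})"
    proof (rule mult_right_mono)
      have "(\<Sum>i\<in>{nb k..<mb k}. (cmod (\<gamma> k i y))\<^sup>2) = (cmod (q k y))\<^sup>2 * hk k y"
        unfolding \<gamma>_def hk_def sq_def by (simp add: norm_mult power_mult_distrib sum_distrib_left)
      also have "\<dots> \<le> (B / e)\<^sup>2 * K"
        using qB[of k y] hkK[OF y, of k] hk0[of k y] e B0 K(1) by (intro mult_mono power_mono) auto
      finally have "sqrt (\<Sum>i\<in>{nb k..<mb k}. (cmod (\<gamma> k i y))\<^sup>2) \<le> sqrt ((B / e)\<^sup>2 * K)" by simp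
      also have "\<dots> = Cs" unfolding Cs_def using B0 e by (simp add: real_sqrt_mult)
      finally show "sqrt (\<Sum>i\<in>{nb k..<mb k}. (cmod (\<gamma> k i y))\<^sup>2) \<le> Cs" .
    qed (simp add: sq_def sum_nonneg)
    finally show ?thesis .
  qed
  have blk_le: "sqrt (sum (sq a y) {nb k..<mb k}) \<le> l2norm X a" if a: "a \<in> l2 X" and y: "y \<in> topspace X" for a y k
  proof -
    have "sum (sq a y) {nb k..<mb k} \<le> sum (sq a y) {..<mb k}" by (rule sum_mono2) (auto simp: sq_nonneg)
    also have "\<dots> \<le> (l2norm X a)\<^sup>2" by (rule ps_le_l2norm[OF cX a y])
    finally show ?thesis using l2norm_sq(4)[OF cX a] real_le_lsqrt by (simp add: real_sqrt_le_iff)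
  qed
  have \<sigma>_cont: "\<sigma> a \<in> cfun X" if a: "a \<in> l2 X" for a
  proof -
    define S where "S = (\<lambda>N y. \<Sum>k<N. part k a y)"
    have Sc: "S N \<in> cfun X" for N unfolding S_def
      by (rule cfun_sum) (auto intro: l2dualD(2)[OF conjunct1[OF pd] a])
    have sa: "\<sigma> a y = part (idx y) a y" for y using a by (simp add: \<sigma>_def)
    have diff: "cmod (\<sigma> a y - S N y) \<le> Cs * sqrt d"
      if y: "y \<in> topspace X" and N: "\<forall>n\<ge>N. \<forall>m. \<forall>x\<in>topspace X. sum (sq a x) {n..<m} \<le> d" for y N d
    proof -
    have dz: "0 \<le> Cs * sqrt d"
    proof -
      have "sum (sq a y) {N..<N} \<le> d" using N y by blast
      then have "0 \<le> d" by simp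
      then show ?thesis using Cs0 by simp
    qed
    show ?thesis
    proof (cases "\<exists>j. y \<in> U j")
      case True
      then obtain j where j: "y \<in> U j" by auto
      have Sj: "S N y = (if j < N then part j a y else 0)"
      proof -
        have "S N y = (\<Sum>k<N. if k = j then part j a y else 0)"
          unfolding S_def by (intro sum.cong refl) (metis (no_types, lifting) Int_iff Ud empty_iff j part0)
        then show ?thesis by simp
      qed
      show ?thesis
      proof (cases "j < N")
        case True then show ?thesis using Sj sa idx_eq[OF j] dz by simp
      next
        case False
        then have "N \<le> nb j" using nk[of j] by linarith
        then have bd: "sum (sq a y) {nb j..<mb j} \<le> d" using N y by auto
        have "cmod (\<sigma> a y - S N y) = cmod (part j a y)" using Sj sa idx_eq[OF j] False by simp
        also have "\<dots> \<le> Cs * sqrt (sum (sq a y) {nb j..<mb j})" by (rule pbound[OF a y])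
        also have "\<dots> \<le> Cs * sqrt d" using bd Cs0 by (intro mult_left_mono) auto
        finally show ?thesis .
      qed
    next
      case False
      then have "\<sigma> a y = 0" "S N y = 0" using part0 sa unfolding S_def by auto
      then show ?thesis using dz by simp
    qed
    qed
    have ua: "ucauchy X a" using l2_imp_ucauchy[OF cX a] .
    have "continuous_map X euclidean (\<sigma> a)"
    proof (rule Met_TC.continuous_map_uniform_limit[where F=sequentially and f=S, simplified])
      show "\<forall>\<^sub>F n in sequentially. continuous_map X euclidean (S n)" using Sc[THEN cfun_cont] by simp
      fix r :: real assume "r > 0"
      define d where "d = (r / (Cs + 1))\<^sup>2"
      have d0: "d > 0" unfolding d_def using \<open>r>0\<close> Cs0 by simp
      obtain N where N: "\<forall>n\<ge>N. \<forall>m. \<forall>x\<in>topspace X. sum (sq a x) {n..<m} \<le> d"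
        using ua d0 unfolding ucauchy_def by auto
      have "Cs * sqrt d < r"
      proof -
        have "sqrt d = r / (Cs + 1)" unfolding d_def using \<open>r>0\<close> Cs0 by simp
        then have "Cs * sqrt d = r * (Cs / (Cs + 1))" by simp
        also have "\<dots> < r * 1" using \<open>r>0\<close> Cs0 by (intro mult_strict_left_mono) auto
        finally show ?thesis by simp
      qed
      then have "dist (S n y) (\<sigma> a y) < r" if "n \<ge> N" "y \<in> topspace X" for n y
        using diff[OF that(2), of n d] N that(1) unfolding dist_norm
        by (smt (verit) norm_minus_commute order_trans)
      then show "\<forall>\<^sub>F n in sequentially. \<forall>x\<in>topspace X. dist (S n x) (\<sigma> a x) < r"
        unfolding eventually_sequentially by auto
    qed
    moreover have "\<sigma> a y = 0" if "y \<notin> topspace X" for y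
    proof -
      have "y \<notin> U (idx y)" using UT that by auto
      then show ?thesis using part0 sa by simp
    qed
    ultimately show ?thesis by (rule cfunI)
  qed
  have \<sigma>_dual: "\<sigma> \<in> l2dual X"
  proof (rule l2dualI[where C=Cs])
    fix a assume a: "a \<in> l2 X"
    show "cnorm X (\<sigma> a) \<le> Cs * l2norm X a"
    proof (rule cnorm_le)
      show "0 \<le> Cs * l2norm X a" using Cs0 l2norm_sq(4)[OF cX a] by simp
      fix y assume y: "y \<in> topspace X"
      have "cmod (\<sigma> a y) = cmod (part (idx y) a y)" using a by (simp add: \<sigma>_def)
      also have "\<dots> \<le> Cs * sqrt (sum (sq a y) {nb (idx y)..<mb (idx y)})" by (rule pbound[OF a y])
      also have "\<dots> \<le> Cs * l2norm X a" using blk_le[OF a y] Cs0 by (rule mult_left_mono)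
      finally show "cmod (\<sigma> a y) \<le> Cs * l2norm X a" .
    qed
  next
    fix a b assume a: "a \<in> l2 X" and b: "b \<in> l2 X"
    show "\<sigma> (\<lambda>i x. a i x + b i x) = (\<lambda>x. \<sigma> a x + \<sigma> b x)"
      using a b l2_add[OF cX a b]
      by (simp add: \<sigma>_def part_l2 distrib_left sum.distrib)
  next
    fix a f assume a: "a \<in> l2 X" and f: "f \<in> cfun X"
    show "\<sigma> (l2act a f) = (\<lambda>x. \<sigma> a x * f x)"
      using a f l2_act[OF cX a f]
      by (simp add: \<sigma>_def part_l2 sum_distrib_left l2act_def mult_ac)
  next
    fix a assume a: "a \<in> l2 X" show "\<sigma> a \<in> cfun X" by (rule \<sigma>_cont[OF a])
  qed (auto simp: \<sigma>_def)
  define g where "g = F \<sigma>"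
  have gc: "g \<in> cfun X" unfolding g_def by (rule F_cfun[OF F \<sigma>_dual])
  show "\<exists>g\<in>cfun X. (\<forall>k. \<forall>x\<in>U k. g x = lam k x) \<and> (\<forall>x\<in>topspace X - X closure_of (\<Union>k. U k). g x = 0)"
  proof (intro bexI[OF _ gc] conjI allI ballI)
    fix k x assume x: "x \<in> U k"
    obtain f where f: "f \<in> cfun X" "f x = 1" "\<And>y. y \<notin> U k \<Longrightarrow> f y = 0"
      using urysohn_cfun[OF cX hX Uo x] by metis
    have "dact \<sigma> f = dact (part k) f"
    proof (intro ext)
      fix a y
      show "dact \<sigma> f a y = dact (part k) f a y"
      proof (cases "a \<in> l2 X")
        case True then show ?thesis unfolding dact_def \<sigma>_def using f(3) idx_eq by (cases "y \<in> U k") auto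
      next
        case False then show ?thesis unfolding dact_def \<sigma>_def by (simp add: part_nl2)
      qed
    qed
    then have "F (dact \<sigma> f) = F (dact (part k) f)" by simp
    then have "(\<lambda>y. g y * f y) = (\<lambda>y. lam k y * f y)"
      unfolding g_def F_dact[OF F \<sigma>_dual f(1)] F_dact[OF F conjunct1[OF pd] f(1)] Fpart .
    then show "g x = lam k x" using f(2) by (metis mult.right_neutral)
  next
    fix x assume x: "x \<in> topspace X - X closure_of (\<Union>k. U k)"
    define V where "V = topspace X - X closure_of (\<Union>k. U k)"
    have Vo: "openin X V" unfolding V_def by (simp add: openin_diff closedin_closure_of)
    have VU: "y \<in> V \<Longrightarrow> y \<notin> U k" for y k
      using closure_of_subset[of "\<Union>k. U k" X] UT unfolding V_def by auto
    obtain f where f: "f \<in> cfun X" "f x = 1" "\<And>y. y \<notin> V \<Longrightarrow> f y = 0"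
      using urysohn_cfun[OF cX hX Vo] x V_def by metis
    have "dact \<sigma> f = (\<lambda>a y. 0)"
    proof (intro ext)
      fix a y
      show "dact \<sigma> f a y = 0"
      proof (cases "y \<in> V")
        case True then show ?thesis unfolding dact_def \<sigma>_def using part0 VU by auto
      next
        case False then show ?thesis unfolding dact_def using f(3) by simp
      qed
    qed
    then have "(\<lambda>y. g y * f y) = (\<lambda>y. 0)"
      using F_dact[OF F \<sigma>_dual f(1)] F_zero[OF F] unfolding g_def by simp
    then show "g x = 0" using f(2) by (metis mult.right_neutral)
  qed
qed




definition Pbig :: "(nat \<Rightarrow> 'a \<Rightarrow> complex) \<Rightarrow> real \<Rightarrow> 'a set \<Rightarrow> bool" where
  "Pbig c d R \<longleftrightarrow> (\<forall>N. \<exists>n\<ge>N. \<exists>m. \<exists>x\<in>R. d < sum (sq c x) {n..<m})"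

lemma split_step:
  assumes cX: "compact_space X" and hX: "Hausdorff_space X" and cc: "\<And>i. c i \<in> cfun X"
    and pw: "\<And>x. x \<in> topspace X \<Longrightarrow> \<exists>N. \<forall>n\<ge>N. \<forall>m. sum (sq c x) {n..<m} < d/2"
    and d: "d > 0" and R: "openin X R" and PR: "Pbig c d R"
  shows "\<exists>n m U R'. n \<ge> N0 \<and> openin X U \<and> U \<noteq> {} \<and> U \<subseteq> R \<and> openin X R' \<and> R' \<subseteq> R \<and>
     U \<inter> R' = {} \<and> Pbig c d R' \<and> (\<forall>x\<in>U. d/2 \<le> sum (sq c x) {n..<m})"
proof -
  have RT: "R \<subseteq> topspace X" using R openin_subset by metis
  have "\<exists>y0\<in>topspace X. \<forall>W. openin X W \<and> y0 \<in> W \<longrightarrow> Pbig c d (R \<inter> W)"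
  proof (rule ccontr)
    assume "\<not> ?thesis"
    then have "\<forall>y\<in>topspace X. \<exists>W. openin X W \<and> y \<in> W \<and> (\<exists>N. \<forall>n\<ge>N. \<forall>m. \<forall>x\<in>R \<inter> W. sum (sq c x) {n..<m} \<le> d)"
      unfolding Pbig_def by (auto simp: not_less)
    then obtain Wf Nf where WN: "\<And>y. y \<in> topspace X \<Longrightarrow> openin X (Wf y) \<and> y \<in> Wf y \<and>
        (\<forall>n\<ge>Nf y. \<forall>m. \<forall>x\<in>R \<inter> Wf y. sum (sq c x) {n..<m} \<le> d)"
      by metis
    have "compactin X (topspace X)" using cX by (simp add: compact_space_def)
    moreover have "\<forall>U\<in>Wf ` topspace X. openin X U" using WN by auto
    moreover have "topspace X \<subseteq> \<Union>(Wf ` topspace X)" using WN by auto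
    ultimately obtain \<V> where V: "finite \<V>" "\<V> \<subseteq> Wf ` topspace X" "topspace X \<subseteq> \<Union>\<V>"
      unfolding compactin_def by metis
    then obtain Y where Y: "Y \<subseteq> topspace X" "finite Y" "\<V> = Wf ` Y"
      using finite_subset_image[OF V(1,2)] by auto
    define N where "N = (\<Sum>y\<in>Y. Nf y)"
    have "\<exists>n\<ge>N. \<exists>m. \<exists>x\<in>R. d < sum (sq c x) {n..<m}" using PR unfolding Pbig_def by (rule allE)
    then obtain n m x where nmx: "n \<ge> N" "x \<in> R" "d < sum (sq c x) {n..<m}" by auto
    then obtain y where y: "y \<in> Y" "x \<in> Wf y" using V(3) Y(3) RT by auto
    have "Nf y \<le> N" unfolding N_def using member_le_sum[of y Y Nf] y(1) Y(2) by auto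
    moreover have yT: "y \<in> topspace X" using Y(1) y(1) by auto
    have W3: "\<forall>n\<ge>Nf y. \<forall>m. \<forall>x\<in>R \<inter> Wf y. sum (sq c x) {n..<m} \<le> d" using WN[OF yT] by auto
    ultimately have "sum (sq c x) {n..<m} \<le> d" using nmx y(2) by (meson IntI le_trans)
    then show False using nmx by simp
  qed
  then obtain y0 where y0: "y0 \<in> topspace X" "\<And>W. openin X W \<Longrightarrow> y0 \<in> W \<Longrightarrow> Pbig c d (R \<inter> W)" by auto
  obtain N1 where N1: "\<And>n m. n \<ge> N1 \<Longrightarrow> sum (sq c y0) {n..<m} < d/2" using pw[OF y0(1)] by auto
  obtain n m x where nmx: "n \<ge> max N0 N1" "x \<in> R" "d < sum (sq c x) {n..<m}" using PR unfolding Pbig_def by metis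
  have xy: "x \<noteq> y0" using N1[of n m] nmx d by auto
  have xT: "x \<in> topspace X" using RT nmx(2) by auto
  obtain Ox Oy where O: "openin X Ox" "openin X Oy" "x \<in> Ox" "y0 \<in> Oy" "disjnt Ox Oy"
    using hX xT y0(1) xy unfolding Hausdorff_space_def by metis
  define G where "G = {z \<in> topspace X. sum (sq c z) {n..<m} \<in> {d/2<..}}"
  have Go: "openin X G" unfolding G_def
    by (rule openin_continuous_map_preimage[OF cont_block[OF cc]]) simp
  define U where "U = Ox \<inter> R \<inter> G"
  define R' where "R' = R \<inter> Oy"
  show ?thesis
  proof (intro exI conjI)
    show "N0 \<le> n" using nmx by simp
    show "openin X U" unfolding U_def using O(1) R Go by (intro openin_Int)
    show "U \<noteq> {}" unfolding U_def G_def using O(3) nmx xT d by auto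
    show "U \<subseteq> R" unfolding U_def by auto
    show "openin X R'" unfolding R'_def using R O(2) by (rule openin_Int)
    show "R' \<subseteq> R" unfolding R'_def by auto
    show "U \<inter> R' = {}" unfolding U_def R'_def using O(5) by (auto simp: disjnt_def)
    show "Pbig c d R'" unfolding R'_def by (rule y0(2)[OF O(2,4)])
    show "\<forall>x\<in>U. d / 2 \<le> sum (sq c x) {n..<m}" unfolding U_def G_def by auto
  qed
qed

lemma caseB:
  assumes cX: "compact_space X" and hX: "Hausdorff_space X" and F: "F \<in> l2bidual X"
    and K: "K \<ge> 0" "\<And>x n. x \<in> topspace X \<Longrightarrow> sum (sq c x) {..<n} \<le> K"
    and cdef: "c = (\<lambda>i. F (proj X i))"
    and nuc: "\<not> ucauchy X c"
  shows "\<exists>U :: nat \<Rightarrow> 'a set. (\<forall>k. openin X (U k) \<and> U k \<noteq> {}) \<and>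
           (\<forall>i j. i \<noteq> j \<longrightarrow> U i \<inter> U j = {}) \<and> prod_canon_incl X U"
proof -
  have cc: "c i \<in> cfun X" for i unfolding cdef by (rule F_cfun[OF F proj_dual[OF cX]])
  obtain d where d: "d > 0" and dP: "\<forall>N. \<exists>n\<ge>N. \<exists>m. \<exists>x\<in>topspace X. d < sum (sq c x) {n..<m}"
    using nuc unfolding ucauchy_def by (auto simp: not_le)
  have PT: "Pbig c d (topspace X)" using dP unfolding Pbig_def by auto
  have pw: "\<exists>N. \<forall>n\<ge>N. \<forall>m. sum (sq c x) {n..<m} < d/2" if x: "x \<in> topspace X" for x
  proof -
    have "summable (sq c x)"
    proof (rule bounded_imp_summable)
      show "0 \<le> sq c x n" for n by (rule sq_nonneg)
      show "(\<Sum>k\<le>n. sq c x k) \<le> K" for n using K(2)[OF x, of "Suc n"] by (simp add: lessThan_Suc_atMost)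
    qed
    then obtain N where N: "\<forall>m\<ge>N. \<forall>n. norm (sum (sq c x) {m..<n}) < d/2"
      unfolding summable_Cauchy using d by (meson half_gt_zero)
    have "sum (sq c x) {n..<m} < d/2" if "n \<ge> N" for n m
      using N that by (metis real_norm_def abs_of_nonneg sum_nonneg sq_nonneg)
    then show ?thesis by auto
  qed
  have step: "\<And>R N0. openin X R \<Longrightarrow> Pbig c d R \<Longrightarrow> \<exists>n m U R'. n \<ge> N0 \<and> openin X U \<and> U \<noteq> {} \<and> U \<subseteq> R \<and> openin X R' \<and> R' \<subseteq> R \<and>
     U \<inter> R' = {} \<and> Pbig c d R' \<and> (\<forall>x\<in>U. d/2 \<le> sum (sq c x) {n..<m})"
    by (rule split_step[OF cX hX cc pw d]) auto
  then obtain nf mf Uf Rf where st: "\<And>R N0. openin X R \<Longrightarrow> Pbig c d R \<Longrightarrow> nf R N0 \<ge> N0 \<and> openin X (Uf R N0) \<and> Uf R N0 \<noteq> {} \<and>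
     Uf R N0 \<subseteq> R \<and> openin X (Rf R N0) \<and> Rf R N0 \<subseteq> R \<and>
     Uf R N0 \<inter> Rf R N0 = {} \<and> Pbig c d (Rf R N0) \<and> (\<forall>x\<in>Uf R N0. d/2 \<le> sum (sq c x) {nf R N0..<mf R N0})"
    by metis
  define Rs where "Rs = rec_nat (topspace X) (\<lambda>k R. Rf R k)"
  have Rs0: "Rs 0 = topspace X" and RsS: "\<And>k. Rs (Suc k) = Rf (Rs k) k" by (simp_all add: Rs_def)
  have inv: "openin X (Rs k) \<and> Pbig c d (Rs k)" for k
  proof (induction k)
    case 0 then show ?case using PT by (simp add: Rs0)
  next
    case (Suc k) then show ?case using st[of "Rs k" k] by (simp add: RsS)
  qed
  define U where "U = (\<lambda>k. Uf (Rs k) k)"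
  define nb where "nb = (\<lambda>k. nf (Rs k) k)"
  define mb where "mb = (\<lambda>k. mf (Rs k) k)"
  have stk: "nb k \<ge> k \<and> openin X (U k) \<and> U k \<noteq> {} \<and>
     U k \<subseteq> Rs k \<and> Rs (Suc k) \<subseteq> Rs k \<and> U k \<inter> Rs (Suc k) = {} \<and> (\<forall>x\<in>U k. d/2 \<le> sum (sq c x) {nb k..<mb k})" for k
    using st[of "Rs k" k] inv[of k] unfolding U_def nb_def mb_def RsS by auto
  have dec: "Rs j \<subseteq> Rs k" if "k \<le> j" for j k
  proof -
    have "Rs (Suc n) \<subseteq> Rs n" for n using stk[of n] by auto
    then show ?thesis using lift_Suc_antimono_le[of Rs k j] that by auto
  qed
  have disj: "U i \<inter> U j = {}" if "i \<noteq> j" for i j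
  proof -
    have "U a \<inter> U b = {}" if "a < b" for a b
    proof -
      have "U b \<subseteq> Rs (Suc a)" using stk[of b] dec[of "Suc a" b] that by auto
      then show ?thesis using stk[of a] by auto
    qed
    then show ?thesis using \<open>i \<noteq> j\<close> by (metis Int_commute linorder_neqE_nat)
  qed
  have "prod_canon_incl X U"
  proof (rule canon_from_F[OF cX hX F K cdef, of "d/2" U nb mb])
    show "0 < d / 2" using d by simp
  qed (use stk disj in auto)
  then show ?thesis using stk disj by auto
qed




definition ev :: "'a topology \<Rightarrow> nat \<Rightarrow> nat \<Rightarrow> 'a \<Rightarrow> complex" where
  "ev X i = (\<lambda>j x. if j = i \<and> x \<in> topspace X then 1 else 0)"

definition trunc :: "nat \<Rightarrow> (nat \<Rightarrow> 'a \<Rightarrow> complex) \<Rightarrow> nat \<Rightarrow> 'a \<Rightarrow> complex" where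
  "trunc n w = (\<lambda>j x. if j < n then w j x else 0)"

definition tailq :: "nat \<Rightarrow> (nat \<Rightarrow> 'a \<Rightarrow> complex) \<Rightarrow> nat \<Rightarrow> 'a \<Rightarrow> complex" where
  "tailq n w = (\<lambda>j x. if j < n then 0 else w j x)"

lemma ev_l2: assumes cX: "compact_space X" shows "ev X i \<in> l2 X"
proof (rule l2_fin[OF cX, of _ "Suc i"])
  fix j show "ev X i j \<in> cfun X"
    by (cases "j = i") (simp_all add: ev_def cfun_ind cfun_zero)
qed (simp add: ev_def)

lemma trunc_l2: "compact_space X \<Longrightarrow> w \<in> l2 X \<Longrightarrow> trunc n w \<in> l2 X"
  unfolding trunc_def by (rule l2_restrict)
lemma tailq_l2: "compact_space X \<Longrightarrow> w \<in> l2 X \<Longrightarrow> tailq n w \<in> l2 X"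
proof -
  assume cX: "compact_space X" and w: "w \<in> l2 X"
  have "(\<lambda>j x. if \<not> j < n then w j x else 0) \<in> l2 X" by (rule l2_restrict[OF cX w])
  moreover have "tailq n w = (\<lambda>j x. if \<not> j < n then w j x else 0)" by (simp add: tailq_def fun_eq_iff)
  ultimately show ?thesis by simp
qed

lemma tau_zero:
  assumes cX: "compact_space X" and t: "\<tau> \<in> l2dual X"
  shows "\<tau> (\<lambda>j x. 0) = (\<lambda>x. 0)"
proof -
  have "\<tau> (\<lambda>j x. (0::complex) + 0) = (\<lambda>x. \<tau> (\<lambda>j x. 0) x + \<tau> (\<lambda>j x. 0) x)"
    by (rule l2dualD(3)[OF t l2_zero[OF cX] l2_zero[OF cX]])
  then show ?thesis by (simp add: fun_eq_iff)
qed

lemma tau_trunc: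
  assumes cX: "compact_space X" and t: "\<tau> \<in> l2dual X" and w: "w \<in> l2 X"
  shows "\<tau> (trunc n w) = (\<lambda>x. \<Sum>i<n. \<tau> (ev X i) x * w i x)"
proof (induction n)
  case 0
  have "trunc 0 w = (\<lambda>j x. 0)" by (simp add: trunc_def)
  then show ?case using tau_zero[OF cX t] by simp
next
  case (Suc n)
  have eq: "trunc (Suc n) w = (\<lambda>j x. trunc n w j x + l2act (ev X n) (w n) j x)"
    using l2_out[OF w] by (auto simp: trunc_def l2act_def ev_def fun_eq_iff less_Suc_eq)
  show ?case
    unfolding eq l2dualD(3)[OF t trunc_l2[OF cX w] l2_act[OF cX ev_l2[OF cX] l2D[OF w]]]
      l2dualD(4)[OF t ev_l2[OF cX] l2D[OF w]] Suc by simp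
qed

lemma tau_split:
  assumes cX: "compact_space X" and t: "\<tau> \<in> l2dual X" and w: "w \<in> l2 X"
  shows "\<tau> w = (\<lambda>x. \<tau> (trunc n w) x + \<tau> (tailq n w) x)"
proof -
  have "w = (\<lambda>j x. trunc n w j x + tailq n w j x)" by (simp add: trunc_def tailq_def fun_eq_iff)
  then have "\<tau> w = \<tau> (\<lambda>j x. trunc n w j x + tailq n w j x)" by simp
  also have "\<dots> = (\<lambda>x. \<tau> (trunc n w) x + \<tau> (tailq n w) x)"
    by (rule l2dualD(3)[OF t trunc_l2[OF cX w] tailq_l2[OF cX w]])
  finally show ?thesis .
qed

lemma sum_tail_eq:
  fixes s :: "nat \<Rightarrow> real" and N n :: nat
  shows "(\<Sum>i<N. if i < n then 0 else s i) = (\<Sum>i\<in>{n..<N}. s i)"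
proof (induction N)
  case 0 then show ?case by simp
next
  case (Suc N)
  show ?case
  proof (cases "n \<le> N")
    case True
    then have "{n..<Suc N} = insert N {n..<N}" by auto
    then show ?thesis using Suc True by simp
  next
    case False then show ?thesis using Suc by simp
  qed
qed

lemma tail_norm:
  assumes cX: "compact_space X" and w: "w \<in> l2 X" and eta: "0 \<le> \<eta>"
    and b: "\<And>x N. x \<in> topspace X \<Longrightarrow> sum (sq w x) {n..<N} \<le> \<eta>"
  shows "l2norm X (tailq n w) \<le> sqrt \<eta>"
proof (rule l2norm_le[OF cX tailq_l2[OF cX w] eta])
  fix x N assume "x \<in> topspace X"
  have "sum (sq (tailq n w) x) {..<N} = sum (sq w x) {n..<N}"
  proof -
    have "sum (sq (tailq n w) x) {..<N} = (\<Sum>i<N. if i < n then 0 else sq w x i)"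
      by (intro sum.cong refl) (simp add: sq_def tailq_def)
    then show ?thesis using sum_tail_eq[where N=N and n=n and s="sq w x"] by simp
  qed
  then show "sum (sq (tailq n w) x) {..<N} \<le> \<eta>" using b[OF \<open>x \<in> topspace X\<close>] by simp
qed

lemma tau_lim:
  assumes cX: "compact_space X" and t: "\<tau> \<in> l2dual X" and w: "w \<in> l2 X" and x: "x \<in> topspace X"
  shows "(\<lambda>N. \<Sum>i<N. \<tau> (ev X i) x * w i x) \<longlonglongrightarrow> \<tau> w x"
proof (rule LIMSEQ_I)
  fix r :: real assume "r > 0"
  obtain D where D: "D \<ge> 0" "\<And>a. a \<in> l2 X \<Longrightarrow> cnorm X (\<tau> a) \<le> D * l2norm X a" using dual_bound[OF cX t] by auto
  define \<delta> where "\<delta> = (r / (D + 1))\<^sup>2"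
  have d0: "\<delta> > 0" unfolding \<delta>_def using \<open>r>0\<close> D by simp
  obtain N0 where N0: "\<forall>n\<ge>N0. \<forall>m. \<forall>x\<in>topspace X. sum (sq w x) {n..<m} \<le> \<delta>"
    using l2_imp_ucauchy[OF cX w] d0 unfolding ucauchy_def by auto
  have "norm ((\<Sum>i<N. \<tau> (ev X i) x * w i x) - \<tau> w x) < r" if "N \<ge> N0" for N
  proof -
    have "(\<Sum>i<N. \<tau> (ev X i) x * w i x) - \<tau> w x = - \<tau> (tailq N w) x"
      using tau_split[OF cX t w, of N] tau_trunc[OF cX t w, of N] by (simp add: fun_eq_iff)
    then have "norm ((\<Sum>i<N. \<tau> (ev X i) x * w i x) - \<tau> w x) = cmod (\<tau> (tailq N w) x)" by simp
    also have "\<dots> \<le> cnorm X (\<tau> (tailq N w))"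
      by (rule cnorm_ge[OF cX cfun_cont[OF l2dualD(2)[OF t tailq_l2[OF cX w]]] x])
    also have "\<dots> \<le> D * l2norm X (tailq N w)" by (rule D(2)[OF tailq_l2[OF cX w]])
    also have "\<dots> \<le> D * sqrt \<delta>"
      using tail_norm[OF cX w less_imp_le[OF d0], of N] N0 that D(1) by (intro mult_left_mono) auto
    also have "\<dots> < r"
    proof -
      have "sqrt \<delta> = r / (D + 1)" unfolding \<delta>_def using \<open>r>0\<close> D by simp
      then have "D * sqrt \<delta> = r * (D / (D + 1))" by simp
      also have "\<dots> < r * 1" using \<open>r>0\<close> D by (intro mult_strict_left_mono) auto
      finally show ?thesis by simp
    qed
    finally show ?thesis .
  qed
  then show "\<exists>no. \<forall>n\<ge>no. norm ((\<Sum>i<n. \<tau> (ev X i) x * w i x) - \<tau> w x) < r" by auto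
qed




lemma cfun_neg: "f \<in> cfun X \<Longrightarrow> (\<lambda>x. - f x) \<in> cfun X"
  by (simp add: cfun_def)

lemma sum_tail_eq_gen:
  fixes s :: "nat \<Rightarrow> 'b::comm_monoid_add" and N n :: nat
  shows "(\<Sum>i<N. if i < n then 0 else s i) = (\<Sum>i\<in>{n..<N}. s i)"
proof (induction N)
  case 0 then show ?case by simp
next
  case (Suc N)
  show ?case
  proof (cases "n \<le> N")
    case True
    then have "{n..<Suc N} = insert N {n..<N}" by auto
    then show ?thesis using Suc True by (simp add: add.commute)
  next
    case False then show ?thesis using Suc by simp
  qed
qed

lemma b_bound:
  assumes cX: "compact_space X" and t: "\<tau> \<in> l2dual X" and D: "D \<ge> 0"
    and Db: "\<And>a. a \<in> l2 X \<Longrightarrow> cnorm X (\<tau> a) \<le> D * l2norm X a"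
    and x: "x \<in> topspace X"
  shows "sum (sq (\<lambda>i. \<tau> (ev X i)) x) {..<n} \<le> D\<^sup>2"
proof -
  define bb where "bb = (\<lambda>i. \<tau> (ev X i))"
  have bc: "bb i \<in> cfun X" for i unfolding bb_def by (rule l2dualD(2)[OF t ev_l2[OF cX]])
  define w where "w = (\<lambda>j x. if j < n then cnj (bb j x) else 0)"
  have w: "w \<in> l2 X"
  proof (rule l2_fin[OF cX, of _ n])
    fix j show "w j \<in> cfun X" by (cases "j < n") (simp_all add: w_def cfun_cnj bc cfun_zero)
  qed (simp add: w_def)
  have tw: "trunc n w = w" by (simp add: trunc_def w_def fun_eq_iff)
  define S where "S = (\<lambda>x. sum (sq bb x) {..<n})"
  have tauw: "\<tau> w = (\<lambda>x. complex_of_real (S x))"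
  proof -
    have "\<tau> w = (\<lambda>x. \<Sum>i<n. bb i x * w i x)" using tau_trunc[OF cX t w, of n] tw by (simp add: bb_def)
    also have "\<dots> = (\<lambda>x. \<Sum>i<n. bb i x * cnj (bb i x))" by (simp add: w_def)
    also have "\<dots> = (\<lambda>x. complex_of_real (S x))" unfolding S_def sq_def by (simp only: sum_cnj_self)
    finally show ?thesis .
  qed
  define M where "M = cnorm X (\<lambda>x. complex_of_real (S x))"
  have Scont: "continuous_map X euclidean (\<lambda>x. complex_of_real (S x))"
    using cfun_cont[OF l2dualD(2)[OF t w]] tauw by simp
  have M0: "0 \<le> M" unfolding M_def by (rule cnorm_nonneg[OF cX Scont])
  have SM: "S y \<le> M" if "y \<in> topspace X" for y
  proof -
    have "0 \<le> S y" by (simp add: S_def sum_nonneg sq_nonneg)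
    then have "S y = cmod (complex_of_real (S y))" by (simp only: norm_of_real; simp)
    also have "\<dots> \<le> M" unfolding M_def by (rule cnorm_ge[OF cX Scont that])
    finally show ?thesis .
  qed
  have wn: "l2norm X w \<le> sqrt M"
  proof (rule l2norm_le[OF cX w M0])
    fix y N assume y: "y \<in> topspace X"
    have "sum (sq w y) {..<N} = sum (sq bb y) ({..<N} \<inter> {..<n})"
    proof -
      have "sum (sq w y) {..<N} = (\<Sum>i<N. if i < n then sq bb y i else 0)"
        by (intro sum.cong refl) (simp add: sq_def w_def)
      then show ?thesis by (simp add: sum.inter_restrict)
    qed
    also have "\<dots> \<le> S y" unfolding S_def by (rule sum_mono2) (auto simp: sq_nonneg)
    finally show "sum (sq w y) {..<N} \<le> M" using SM[OF y] by simp
  qed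
  have "M \<le> D * sqrt M"
  proof -
    have "M = cnorm X (\<tau> w)" unfolding M_def tauw ..
    also have "\<dots> \<le> D * l2norm X w" by (rule Db[OF w])
    also have "\<dots> \<le> D * sqrt M" using wn D by (rule mult_left_mono)
    finally show ?thesis .
  qed
  then have "M \<le> D\<^sup>2"
    by (metis M0 D real_sqrt_le_iff real_sqrt_mult_self mult_right_le_imp_le not_less real_sqrt_gt_zero
          real_sqrt_pow2_iff real_sqrt_unique power2_eq_square mult_le_cancel_right_pos le_less)
  then show ?thesis using SM[OF x] unfolding S_def bb_def by linarith
qed

lemma baire_step:
  assumes cX: "compact_space X" and hX: "Hausdorff_space X" and bc: "\<And>i. bb i \<in> cfun X"
    and sm: "\<And>z. z \<in> topspace X \<Longrightarrow> summable (sq bb z)" and eta: "\<eta> > 0"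
    and W: "openin X W" "W \<noteq> {}"
  shows "\<exists>V n. openin X V \<and> V \<noteq> {} \<and> V \<subseteq> W \<and> (\<forall>z\<in>V. \<forall>N. sum (sq bb z) {n..<N} \<le> \<eta>)"
proof -
  define E where "E = (\<lambda>n. {z \<in> topspace X. \<forall>N. sum (sq bb z) {n..<N} \<le> \<eta>})"
  have WT: "W \<subseteq> topspace X" using W(1) openin_subset by metis
  have closedE: "closedin X (E n)" for n
  proof -
    have "E n = \<Inter> (range (\<lambda>N. {z \<in> topspace X. sum (sq bb z) {n..<N} \<in> {..\<eta>}}))"
      unfolding E_def by auto
    moreover have "closedin X {z \<in> topspace X. sum (sq bb z) {n..<N} \<in> {..\<eta>}}" for N
      by (rule closedin_continuous_map_preimage[OF cont_block[OF bc]]) (simp add: closed_closedin[symmetric])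
    ultimately show ?thesis by (auto intro: closedin_Inter)
  qed
  have cover: "\<exists>n. z \<in> E n" if z: "z \<in> W" for z
  proof -
    have zT: "z \<in> topspace X" using z WT by auto
    obtain n where n: "\<forall>m\<ge>n. \<forall>N. norm (sum (sq bb z) {m..<N}) < \<eta>"
      using sm[OF zT] eta unfolding summable_Cauchy by metis
    have "sum (sq bb z) {n..<N} \<le> \<eta>" for N using n by (metis real_norm_def abs_le_iff less_imp_le order_refl)
    then show ?thesis using zT unfolding E_def by auto
  qed
  define S where "S = subtopology X W"
  have tS: "topspace S = W" unfolding S_def using WT by auto
  have lcS: "locally_compact_space S" unfolding S_def
    by (rule locally_compact_space_open_subset[OF _ compact_imp_locally_compact_space[OF cX] W(1)]) (use hX in simp)
  have rgS: "regular_space S" unfolding S_def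
    by (rule regular_space_subtopology[OF locally_compact_Hausdorff_imp_regular_space[OF compact_imp_locally_compact_space[OF cX] hX]])
  have "\<exists>n. S interior_of (E n \<inter> W) \<noteq> {}"
  proof (rule ccontr)
    assume "\<not> ?thesis"
    then have empt: "\<And>n. S interior_of (E n \<inter> W) = {}" by auto
    have "S interior_of \<Union>(range (\<lambda>n. E n \<inter> W)) = {}"
    proof (rule Baire_category_alt)
      show "completely_metrizable_space S \<or> locally_compact_space S \<and> regular_space S" using lcS rgS by simp
      show "countable (range (\<lambda>n. E n \<inter> W))" by simp
      fix T assume "T \<in> range (\<lambda>n. E n \<inter> W)"
      then obtain n where T: "T = E n \<inter> W" by auto
      show "closedin S T \<and> S interior_of T = {}"
        unfolding T S_def using closedE[of n] empt[of n] by (auto simp: closedin_subtopology S_def)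
    qed
    moreover have "\<Union>(range (\<lambda>n. E n \<inter> W)) = W" using cover by auto
    ultimately have "S interior_of W = {}" by simp
    then show False using tS W(2) by (metis interior_of_topspace)
  qed
  then obtain n where n: "S interior_of (E n \<inter> W) \<noteq> {}" by auto
  define V where "V = S interior_of (E n \<inter> W)"
  have "openin (subtopology X W) V" unfolding V_def S_def by simp
  then have "openin X V" using W(1) by (rule openin_trans_full)
  moreover have "V \<subseteq> E n \<inter> W" unfolding V_def by (rule interior_of_subset)
  moreover have "V \<noteq> {}" using n unfolding V_def .
  ultimately show ?thesis unfolding E_def by (intro exI[of _ V] exI[of _ n]) auto
qed




lemma blk_le_l2norm:
  assumes cX: "compact_space X" and a: "a \<in> l2 X" and y: "y \<in> topspace X"
  shows "sqrt (sum (sq a y) {n..<m}) \<le> l2norm X a"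
proof -
  have "sum (sq a y) {n..<m} \<le> sum (sq a y) {..<m}" by (rule sum_mono2) (auto simp: sq_nonneg)
  also have "\<dots> \<le> (l2norm X a)\<^sup>2" by (rule ps_le_l2norm[OF cX a y])
  finally show ?thesis using l2norm_sq(4)[OF cX a] real_le_lsqrt by (simp add: real_sqrt_le_iff)
qed

lemma loc_bound:
  assumes cX: "compact_space X" and hX: "Hausdorff_space X" and F: "F \<in> l2bidual X"
    and C: "C \<ge> 0" "\<And>\<sigma>. \<sigma> \<in> l2dual X \<Longrightarrow> cnorm X (F \<sigma>) \<le> C * dnorm X \<sigma>"
    and cdef: "c = (\<lambda>i. F (proj X i))" and adef: "a = (\<lambda>i x. cnj (c i x))" and aL: "a \<in> l2 X"
    and t: "\<tau> \<in> l2dual X" and bdef: "bb = (\<lambda>i. \<tau> (ev X i))"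
    and V: "openin X V" and y: "y \<in> V" and eta: "\<eta> \<ge> 0"
    and Vb: "\<And>z N. z \<in> V \<Longrightarrow> sum (sq bb z) {n..<N} \<le> \<eta>"
  shows "cmod (F \<tau> y - cnj (\<tau> a y)) \<le> sqrt \<eta> * (C + l2norm X a)"
proof -
  have VT: "V \<subseteq> topspace X" using V openin_subset by metis
  have yT: "y \<in> topspace X" using VT y by auto
  have bc: "bb i \<in> cfun X" for i unfolding bdef by (rule l2dualD(2)[OF t ev_l2[OF cX]])
  have dn: "dcomb X {..<n} (\<lambda>i x. - bb i x) \<in> l2dual X \<and>
     (\<forall>F\<in>l2bidual X. F (dcomb X {..<n} (\<lambda>i x. - bb i x)) = (\<lambda>x. \<Sum>i\<in>{..<n}. F (proj X i) x * cnj (- bb i x)))"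
    by (rule dcomb_dual_F[OF cX]) (auto intro: cfun_neg bc)
  define \<rho> where "\<rho> = (\<lambda>w x. \<tau> w x + dcomb X {..<n} (\<lambda>i x. - bb i x) w x)"
  have \<rho>d: "\<rho> \<in> l2dual X" unfolding \<rho>_def by (rule dual_add[OF cX t conjunct1[OF dn]])
  have \<rho>w: "\<rho> w = \<tau> (tailq n w)" if w: "w \<in> l2 X" for w
  proof -
    have "dcomb X {..<n} (\<lambda>i x. - bb i x) w = (\<lambda>x. - \<tau> (trunc n w) x)"
      using w tau_trunc[OF cX t w, of n] by (simp add: dcomb_def bdef sum_negf)
    then show ?thesis unfolding \<rho>_def using tau_split[OF cX t w, of n] by (simp add: fun_eq_iff)
  qed
  obtain f where f: "f \<in> cfun X" "f y = 1" "\<And>z. z \<notin> V \<Longrightarrow> f z = 0" "\<And>z. cnj (f z) = f z"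
    "\<And>z. cmod (f z) \<le> 1" using urysohn_cfun[OF cX hX V y] by metis
  define \<rho>' where "\<rho>' = dact \<rho> f"
  have \<rho>'d: "\<rho>' \<in> l2dual X" unfolding \<rho>'_def by (rule dual_dact[OF cX \<rho>d f(1)])
  have tailbound: "cmod (\<tau> (tailq n w) z) \<le> sqrt \<eta> * l2norm X w" if w: "w \<in> l2 X" and z: "z \<in> V" for w z
  proof -
    have zT: "z \<in> topspace X" using z VT by auto
    have L: "(\<lambda>N. \<Sum>i<N. bb i z * tailq n w i z) \<longlonglongrightarrow> \<tau> (tailq n w) z"
      unfolding bdef by (rule tau_lim[OF cX t tailq_l2[OF cX w] zT])
    have "cmod (\<Sum>i<N. bb i z * tailq n w i z) \<le> sqrt \<eta> * l2norm X w" for N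
    proof -
      have "(\<Sum>i<N. bb i z * tailq n w i z) = (\<Sum>i<N. if i < n then 0 else bb i z * w i z)"
        by (intro sum.cong refl) (simp add: tailq_def)
      also have "\<dots> = (\<Sum>i\<in>{n..<N}. bb i z * w i z)" by (rule sum_tail_eq_gen)
      finally have "cmod (\<Sum>i<N. bb i z * tailq n w i z) = cmod (\<Sum>i\<in>{n..<N}. bb i z * w i z)" by simp
      also have "\<dots> \<le> sqrt (\<Sum>i\<in>{n..<N}. (cmod (bb i z))\<^sup>2) * sqrt (\<Sum>i\<in>{n..<N}. (cmod (w i z))\<^sup>2)"
        by (rule CS_complex)
      also have "\<dots> = sqrt (sum (sq bb z) {n..<N}) * sqrt (sum (sq w z) {n..<N})" by (simp add: sq_def)
      also have "\<dots> \<le> sqrt \<eta> * l2norm X w"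
        using Vb[OF z, of N] blk_le_l2norm[OF cX w zT, of n N] eta by (intro mult_mono) (auto intro: sum_nonneg sq_nonneg)
      finally show ?thesis .
    qed
    then show ?thesis by (intro LIMSEQ_le_const2[OF tendsto_norm[OF L]]) auto
  qed
  have \<rho>'b: "cmod (\<rho>' w z) \<le> sqrt \<eta> * l2norm X w" if w: "w \<in> l2 X" and z: "z \<in> topspace X" for w z
  proof (cases "z \<in> V")
    case True
    have "cmod (\<rho>' w z) = cmod (f z) * cmod (\<tau> (tailq n w) z)"
      unfolding \<rho>'_def dact_def \<rho>w[OF w] by (simp add: norm_mult)
    also have "\<dots> \<le> 1 * (sqrt \<eta> * l2norm X w)"
      using f(5)[of z] tailbound[OF w True] by (intro mult_mono) auto
    finally show ?thesis by simp
  next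
    case False
    then show ?thesis unfolding \<rho>'_def dact_def using f(3) eta l2norm_sq(4)[OF cX w] by simp
  qed
  have dnr: "dnorm X \<rho>' \<le> sqrt \<eta>"
  proof (rule dnorm_le)
    show "0 \<le> sqrt \<eta>" using eta by simp
    fix w assume w: "w \<in> l2 X"
    show "cnorm X (\<rho>' w) \<le> sqrt \<eta> * l2norm X w"
      by (rule cnorm_le) (use \<rho>'b[OF w] eta l2norm_sq(4)[OF cX w] in auto)
  qed
  have cna: "cnorm X (\<rho>' a) \<le> sqrt \<eta> * l2norm X a"
    by (rule cnorm_le) (use \<rho>'b[OF aL] eta l2norm_sq(4)[OF cX aL] in auto)
  have eq: "F \<rho>' y - cnj (\<rho>' a y) = F \<tau> y - cnj (\<tau> a y)"
  proof -
    have "F \<rho>' y = F \<rho> y" unfolding \<rho>'_def F_dact[OF F \<rho>d f(1)] using f(2) by simp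
    also have "\<dots> = F \<tau> y + (\<Sum>i<n. c i y * cnj (- bb i y))"
      unfolding \<rho>_def F_add[OF F t conjunct1[OF dn]] using dn F cdef by simp
    finally have A: "F \<rho>' y = F \<tau> y + (\<Sum>i<n. c i y * cnj (- bb i y))" .
    have "\<rho>' a y = \<tau> a y + (\<Sum>i<n. - bb i y * a i y)"
      unfolding \<rho>'_def dact_def \<rho>_def using f(2) aL by (simp add: dcomb_def)
    then have B: "cnj (\<rho>' a y) = cnj (\<tau> a y) + (\<Sum>i<n. cnj (- bb i y) * c i y)"
      by (simp add: adef)
    show ?thesis using A B by (simp add: mult.commute)
  qed
  have "cmod (F \<tau> y - cnj (\<tau> a y)) \<le> cmod (F \<rho>' y) + cmod (\<rho>' a y)"
    unfolding eq[symmetric] by (metis complex_mod_cnj norm_triangle_ineq4)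
  also have "\<dots> \<le> cnorm X (F \<rho>') + cnorm X (\<rho>' a)"
    using cnorm_ge[OF cX cfun_cont[OF F_cfun[OF F \<rho>'d]] yT] cnorm_ge[OF cX cfun_cont[OF l2dualD(2)[OF \<rho>'d aL]] yT]
    by linarith
  also have "\<dots> \<le> C * sqrt \<eta> + sqrt \<eta> * l2norm X a"
    using C(2)[OF \<rho>'d] dnr C(1) cna by (smt (verit) mult_left_mono)
  also have "\<dots> = sqrt \<eta> * (C + l2norm X a)" by (simp add: algebra_simps)
  finally show ?thesis .
qed




lemma caseA:
  assumes cX: "compact_space X" and hX: "Hausdorff_space X" and F: "F \<in> l2bidual X"
    and cdef: "c = (\<lambda>i. F (proj X i))" and uc: "ucauchy X c"
  shows "\<exists>a\<in>l2 X. \<forall>\<tau>\<in>l2dual X. F \<tau> = (\<lambda>x. cnj (\<tau> a x))"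
proof -
  have cc: "c i \<in> cfun X" for i unfolding cdef by (rule F_cfun[OF F proj_dual[OF cX]])
  define a where "a = (\<lambda>i x. cnj (c i x))"
  have "sq a = sq c" by (simp add: sq_def a_def fun_eq_iff)
  then have "ucauchy X a" using uc unfolding ucauchy_def by simp
  moreover have "\<forall>i. a i \<in> cfun X" unfolding a_def using cc cfun_cnj by auto
  ultimately have aL: "a \<in> l2 X" using l2_iff[OF cX] by auto
  obtain C where C: "C \<ge> 0" "\<And>\<sigma>. \<sigma> \<in> l2dual X \<Longrightarrow> cnorm X (F \<sigma>) \<le> C * dnorm X \<sigma>"
    using F_bound[OF cX F] by auto
  have "F \<tau> = (\<lambda>x. cnj (\<tau> a x))" if t: "\<tau> \<in> l2dual X" for \<tau>
  proof (rule ccontr)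
    assume ne: "F \<tau> \<noteq> (\<lambda>x. cnj (\<tau> a x))"
    define G where "G = (\<lambda>x. F \<tau> x - cnj (\<tau> a x))"
    have Gc: "G \<in> cfun X" unfolding G_def by (rule cfun_diff[OF F_cfun[OF F t] cfun_cnj[OF l2dualD(2)[OF t aL]]])
    obtain x0 where x0: "G x0 \<noteq> 0" using ne unfolding G_def by (auto simp: fun_eq_iff)
    have x0T: "x0 \<in> topspace X" using x0 cfun_out[OF Gc] by auto
    define \<delta> where "\<delta> = cmod (G x0)"
    have \<delta>: "\<delta> > 0" using x0 unfolding \<delta>_def by simp
    define W where "W = {z \<in> topspace X. G z \<in> ball (G x0) (\<delta>/2)}"
    have Wo: "openin X W" unfolding W_def
      by (rule openin_continuous_map_preimage[OF cfun_cont[OF Gc]]) (simp add: open_openin[symmetric])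
    have x0W: "x0 \<in> W" unfolding W_def using x0T \<delta> by simp
    obtain D where D: "D \<ge> 0" "\<And>w. w \<in> l2 X \<Longrightarrow> cnorm X (\<tau> w) \<le> D * l2norm X w" using dual_bound[OF cX t] by auto
    define bb where "bb = (\<lambda>i. \<tau> (ev X i))"
    have bc: "bb i \<in> cfun X" for i unfolding bb_def by (rule l2dualD(2)[OF t ev_l2[OF cX]])
    have sm: "summable (sq bb z)" if z: "z \<in> topspace X" for z
    proof (rule bounded_imp_summable)
      show "0 \<le> sq bb z n" for n by (rule sq_nonneg)
      show "(\<Sum>k\<le>n. sq bb z k) \<le> D\<^sup>2" for n
        using b_bound[OF cX t D z, of "Suc n"] unfolding bb_def by (simp add: lessThan_Suc_atMost)
    qed
    define A where "A = C + l2norm X a"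
    have A0: "A \<ge> 0" unfolding A_def using C(1) l2norm_sq(4)[OF cX aL] by simp
    define \<eta> where "\<eta> = (\<delta> / (2 * (A + 1)))\<^sup>2"
    have \<eta>: "\<eta> > 0" unfolding \<eta>_def using \<delta> A0 by simp
    obtain V n where Vn: "openin X V" "V \<noteq> {}" "V \<subseteq> W" "\<And>z N. z \<in> V \<Longrightarrow> sum (sq bb z) {n..<N} \<le> \<eta>"
      using baire_step[OF cX hX bc sm \<eta> Wo] x0W by blast
    obtain y where y: "y \<in> V" using Vn(2) by auto
    have "cmod (G y) \<le> sqrt \<eta> * A"
      unfolding G_def A_def
      by (rule loc_bound[OF cX hX F C cdef a_def aL t bb_def Vn(1) y less_imp_le[OF \<eta>] Vn(4)])
    also have "\<dots> < \<delta> / 2"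
    proof -
      have "sqrt \<eta> = \<delta> / (2 * (A + 1))" unfolding \<eta>_def using \<delta> A0 by simp
      then have "sqrt \<eta> * A = (\<delta> / 2) * (A / (A + 1))" by simp
      also have "\<dots> < (\<delta> / 2) * 1" using \<delta> A0 by (intro mult_strict_left_mono) auto
      finally show ?thesis by simp
    qed
    finally have lt: "cmod (G y) < \<delta> / 2" .
    have "y \<in> W" using y Vn(3) by auto
    then have "dist (G x0) (G y) < \<delta> / 2" unfolding W_def by simp
    then have "\<delta> < cmod (G y) + \<delta> / 2" unfolding \<delta>_def dist_norm
      by (metis add.commute norm_triangle_ineq2 order_le_less_trans diff_less_eq)
    then show False using lt by simp
  qed
  then show ?thesis using aL by auto
qed

theorem lemma5p3:
  fixes X :: "'a topology"
  assumes "compact_space X" and "Hausdorff_space X"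
    and "\<not> Cstar_reflexive_C X"
  shows "\<exists>U :: nat \<Rightarrow> 'a set. (\<forall>k. openin X (U k) \<and> U k \<noteq> {}) \<and>
           (\<forall>i j. i \<noteq> j \<longrightarrow> U i \<inter> U j = {}) \<and> prod_canon_incl X U"
proof -
  obtain F where F: "F \<in> l2bidual X" and nr: "\<forall>a\<in>l2 X. \<exists>\<tau>\<in>l2dual X. F \<tau> \<noteq> (\<lambda>x. cnj (\<tau> a x))"
    using assms(3) unfolding Cstar_reflexive_C_def by auto
  define c where "c = (\<lambda>i. F (proj X i))"
  obtain K where K: "K \<ge> 0" "\<And>x n. x \<in> topspace X \<Longrightarrow> sum (sq c x) {..<n} \<le> K"
    using c_bounded[OF assms(1) F] unfolding c_def by metis
  show ?thesis
  proof (cases "ucauchy X c")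
    case True
    then show ?thesis using caseA[OF assms(1,2) F c_def True] nr by metis
  next
    case False
    show ?thesis using caseB[OF assms(1,2) F K(1) K(2) c_def False] by simp
  qed
qed


end
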